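(* Let $d=d(n)$ be a positive integer with $d=O(\log n)$, let $\lambda=d^2+d$, and let $m=m(n)$ be a non-negative integer with $m=O((\log n)^2)$. Then \[ S_m=\big(1+O(d^2m^2/n)\big)\frac{\lambda^m}{m!}, \] where the implied constant does not depend on $n$.
   Context: Let $\pi\in\mathfrak{S}_n$ be uniformly random. For indices $i<j$ in $[n]$, the pair $(i,j)$ is a close pair if $|i-j|+|\pi(i)-\pi(j)|<d+2$. For $i\in[n-1]$ let $\mathbf{X}_i$ be the indicator of the event that there exists $j>i$ such that $(i,j)$ is a close pair. For $I\subseteq[n-1]$ let $\mathbf{X}_I=\prod_{i\in I}\mathbf{X}_i$, and for an integer $m\ge0$ let $S_m=\sum_{I\subseteq[n-1],\,|I|=m}\mathbb{E}[\mathbf{X}_I]$. *)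

theory Defs
  imports Complex_Main "HOL-Library.Landau_Symbols" "HOL-Combinatorics.Permutations"
begin

definition close_pair :: "nat \<Rightarrow> (nat \<Rightarrow> nat) \<Rightarrow> nat \<Rightarrow> nat \<Rightarrow> bool" where
  "close_pair d \<pi> i j \<longleftrightarrow>
     \<bar>int i - int j\<bar> + \<bar>int (\<pi> i) - int (\<pi> j)\<bar> < int d + 2"

definition Xev :: "nat \<Rightarrow> nat \<Rightarrow> (nat \<Rightarrow> nat) \<Rightarrow> nat \<Rightarrow> bool" where
  "Xev n d \<pi> i \<longleftrightarrow> (\<exists>j\<in>{i<..n}. close_pair d \<pi> i j)"

definition EXI :: "nat \<Rightarrow> nat \<Rightarrow> nat set \<Rightarrow> real" where
  "EXI n d I = real (card {\<pi>. \<pi> permutes {1..n} \<and> (\<forall>i\<in>I. Xev n d \<pi> i)}) / fact n"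

definition Ssum :: "nat \<Rightarrow> nat \<Rightarrow> nat \<Rightarrow> real" where
  "Ssum n d m = (\<Sum>I \<in> {I. I \<subseteq> {1..<n} \<and> card I = m}. EXI n d I)"

end

theory Submission
  imports Defs "HOL-Library.FuncSet" "HOL-Real_Asymp.Real_Asymp"
begin

lemma perm_extend:
  fixes n :: nat
  assumes V: "V \<subseteq> {1..n}" and inj: "inj_on h V" and img: "h ` V \<subseteq> {1..n}"
  shows "\<exists>\<pi>. \<pi> permutes {1..n} \<and> (\<forall>x\<in>V. \<pi> x = h x)"
proof -
  define S where "S = {1..(n::nat)}"
  have fin: "finite V" using V finite_subset by blast
  have "card (S - V) = card (S - h ` V)"
    using V img inj fin by (simp add: S_def card_Diff_subset card_image)
  then obtain g where g: "bij_betw g (S - V) (S - h ` V)"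
    using finite_same_card_bij[of "S - V" "S - h ` V"] S_def by auto
  define p where "p x = (if x \<in> V then h x else if x \<in> S then g x else x)" for x
  have b1: "bij_betw p V (h ` V)"
    using inj_on_imp_bij_betw[OF inj] by (rule bij_betw_cong[THEN iffD1, rotated]) (simp add: p_def)
  have b2: "bij_betw p (S - V) (S - h ` V)"
    using g by (rule bij_betw_cong[THEN iffD1, rotated]) (simp add: p_def)
  have "bij_betw p (V \<union> (S - V)) (h ` V \<union> (S - h ` V))"
    by (rule bij_betw_combine[OF b1 b2]) auto
  moreover have "V \<union> (S - V) = S" "h ` V \<union> (S - h ` V) = S" using V img S_def by auto
  ultimately have "bij_betw p S S" by simp
  then have "p permutes S" by (rule bij_imp_permutes) (auto simp: p_def S_def dest: subsetD[OF V])
  then show ?thesis unfolding S_def by (intro exI[of _ p]) (simp add: p_def)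
qed

lemma permutes_fix_diff:
  assumes "\<sigma> permutes S" "\<forall>x\<in>V. \<sigma> x = x"
  shows "\<sigma> permutes (S - V)"
  using assms unfolding permutes_def by auto

lemma fiber_card:
  fixes n :: nat
  assumes V: "V \<subseteq> {1..n}" and inj: "inj_on h V" and img: "h ` V \<subseteq> {1..n}"
  shows "card {\<pi>. \<pi> permutes {1..n} \<and> (\<forall>x\<in>V. \<pi> x = h x)} = fact (n - card V)"
proof -
  define S where "S = {1..(n::nat)}"
  obtain p0 where p0: "p0 permutes S" "\<forall>x\<in>V. p0 x = h x"
    using perm_extend[OF assms] S_def by auto
  define B where "B = {\<sigma>. \<sigma> permutes (S - V)}"
  define A where "A = {\<pi>. \<pi> permutes S \<and> (\<forall>x\<in>V. \<pi> x = h x)}"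
  have fin: "finite V" using V finite_subset by blast
  have cB: "card B = fact (n - card V)"
    unfolding B_def by (rule card_permutations) (use V fin in \<open>auto simp: S_def card_Diff_subset\<close>)
  have "bij_betw (\<lambda>\<sigma>. p0 \<circ> \<sigma>) B A"
  proof (rule bij_betw_imageI)
    show "inj_on (\<lambda>\<sigma>. p0 \<circ> \<sigma>) B"
    proof (rule inj_onI)
      fix s t assume "p0 \<circ> s = p0 \<circ> t"
      then show "s = t" using permutes_inj[OF p0(1)] by (auto simp: fun_eq_iff inj_def)
    qed
    show "(\<lambda>\<sigma>. p0 \<circ> \<sigma>) ` B = A"
    proof
      show "(\<lambda>\<sigma>. p0 \<circ> \<sigma>) ` B \<subseteq> A"
      proof
        fix y assume "y \<in> (\<lambda>\<sigma>. p0 \<circ> \<sigma>) ` B"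
        then obtain s where s: "s permutes (S - V)" "y = p0 \<circ> s" by (auto simp: B_def)
        have "s permutes S" using permutes_subset[OF s(1)] by auto
        then have "y permutes S" using s(2) p0(1) permutes_compose by blast
        moreover have "\<forall>x\<in>V. y x = h x" using s p0(2) permutes_not_in[OF s(1)] by auto
        ultimately show "y \<in> A" by (simp add: A_def)
      qed
      show "A \<subseteq> (\<lambda>\<sigma>. p0 \<circ> \<sigma>) ` B"
      proof
        fix y assume y: "y \<in> A"
        define s where "s = inv p0 \<circ> y"
        have yp: "y permutes S" using y by (simp add: A_def)
        have sp: "s permutes S" unfolding s_def using permutes_inv[OF p0(1)] yp permutes_compose by blast
        have "\<forall>x\<in>V. s x = x"
        proof
          fix x assume x: "x \<in> V"
          have "y x = p0 x" using y x p0(2) by (simp add: A_def)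
          then show "s x = x" unfolding s_def using permutes_inverses(2)[OF p0(1)] by simp
        qed
        then have "s \<in> B" using permutes_fix_diff[OF sp] by (simp add: B_def)
        moreover have "y = p0 \<circ> s" unfolding s_def
          using permutes_inverses(1)[OF p0(1)] by (auto simp: fun_eq_iff)
        ultimately show "y \<in> (\<lambda>\<sigma>. p0 \<circ> \<sigma>) ` B" by blast
      qed
    qed
  qed
  then have "card A = card B" by (simp add: bij_betw_same_card)
  then show ?thesis using cB by (simp add: A_def S_def)
qed

lemma card_by_fibers:
  assumes "finite A" "\<And>y. y \<in> f ` A \<Longrightarrow> card {x\<in>A. f x = y} = c"
  shows "card A = card (f ` A) * c"
proof -
  have "A = (\<Union>y\<in>f ` A. {x\<in>A. f x = y})" by auto
  moreover have "card (\<Union>y\<in>f ` A. {x\<in>A. f x = y}) = (\<Sum>y\<in>f ` A. card {x\<in>A. f x = y})"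
    by (rule card_UN_disjoint) (use assms(1) in auto)
  ultimately have "card A = (\<Sum>y\<in>f ` A. card {x\<in>A. f x = y})" by simp
  also have "\<dots> = (\<Sum>y\<in>f ` A. c)" using assms(2) by simp
  finally show ?thesis by simp
qed

lemma finite_perms: "finite {\<pi>. \<pi> permutes {1..(n::nat)} \<and> P \<pi>}"
  using finite_permutations[of "{1..n}"] by (rule finite_subset[rotated]) auto

lemma count_restrict:
  assumes V: "V \<subseteq> {1..n}"
    and resp: "\<And>\<pi> \<pi>'. (\<forall>x\<in>V. \<pi> x = \<pi>' x) \<Longrightarrow> P \<pi> \<Longrightarrow> P \<pi>'"
  shows "card {\<pi>. \<pi> permutes {1..n} \<and> P \<pi>}
         = card ((\<lambda>\<pi>. restrict \<pi> V) ` {\<pi>. \<pi> permutes {1..n} \<and> P \<pi>}) * fact (n - card V)"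
proof (rule card_by_fibers[OF finite_perms])
  fix y assume "y \<in> (\<lambda>\<pi>. restrict \<pi> V) ` {\<pi>. \<pi> permutes {1..n} \<and> P \<pi>}"
  then obtain p1 where p1: "p1 permutes {1..n}" "P p1" "y = restrict p1 V" by auto
  have "{x \<in> {\<pi>. \<pi> permutes {1..n} \<and> P \<pi>}. restrict x V = y}
        = {\<pi>. \<pi> permutes {1..n} \<and> (\<forall>x\<in>V. \<pi> x = p1 x)}"
  proof (intro set_eqI iffI)
    fix x assume "x \<in> {x \<in> {\<pi>. \<pi> permutes {1..n} \<and> P \<pi>}. restrict x V = y}"
    then show "x \<in> {\<pi>. \<pi> permutes {1..n} \<and> (\<forall>x\<in>V. \<pi> x = p1 x)}"
      using p1(3) by (auto simp: restrict_def fun_eq_iff) (metis)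
  next
    fix x assume x: "x \<in> {\<pi>. \<pi> permutes {1..n} \<and> (\<forall>x\<in>V. \<pi> x = p1 x)}"
    then have "P x" using resp[of p1 x] p1(2) by auto
    then show "x \<in> {x \<in> {\<pi>. \<pi> permutes {1..n} \<and> P \<pi>}. restrict x V = y}"
      using x p1(3) by (auto simp: restrict_def fun_eq_iff)
  qed
  also have "card \<dots> = fact (n - card V)"
  proof (rule fiber_card[OF V])
    show "inj_on p1 V" using permutes_inj[OF p1(1)] inj_on_subset by blast
    show "p1 ` V \<subseteq> {1..n}" using V permutes_in_image[OF p1(1)] by auto
  qed
  finally show "card {x \<in> {\<pi>. \<pi> permutes {1..n} \<and> P \<pi>}. restrict x V = y} = fact (n - card V)" .
qed

definition W :: "nat \<Rightarrow> (nat \<times> int) set" where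
  "W d = {(a,b). 1 \<le> a \<and> b \<noteq> 0 \<and> int a + \<bar>b\<bar> \<le> int d + 1}"

definition cst :: "nat \<Rightarrow> (nat \<Rightarrow> nat) \<Rightarrow> nat \<Rightarrow> nat \<times> int \<Rightarrow> bool" where
  "cst n \<pi> i w \<longleftrightarrow> i + fst w \<le> n \<and> int (\<pi> (i + fst w)) = int (\<pi> i) + snd w"

lemma W_eq: "W d = Sigma {1..d+1} (\<lambda>a. {-(int (d+1) - int a)..-1} \<union> {1..int (d+1) - int a})"
  by (auto simp: W_def abs_if)

lemma sum_aux0: "(\<Sum>k=0..d. 2 * k) = d * d + (d::nat)"
  by (induction d) auto

lemma sum_aux: "(\<Sum>a=1..d+1. 2 * (d + 1 - a)) = d * d + (d::nat)"
proof -
  have "(\<Sum>a=1..d+1. 2 * (d + 1 - a)) = (\<Sum>k=0..d. 2 * k)"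
    by (rule sum.reindex_bij_witness[where i="\<lambda>k. d+1-k" and j="\<lambda>a. d+1-a"]) auto
  then show ?thesis using sum_aux0 by simp
qed

lemma finite_W: "finite (W d)" by (simp add: W_eq)

lemma card_W: "card (W d) = d * d + d"
proof -
  have "card (W d) = (\<Sum>a=1..d+1. card ({-(int (d+1) - int a)..-1} \<union> {1..int (d+1) - int a}))"
    unfolding W_eq by (rule card_SigmaI) auto
  also have "\<dots> = (\<Sum>a=1..d+1. 2 * (d + 1 - a))"
  proof (rule sum.cong)
    fix a assume a: "a \<in> {1..d+1}"
    have "card ({-(int (d+1) - int a)..-1} \<union> {1..int (d+1) - int a})
        = card {-(int (d+1) - int a)..-1} + card {1..int (d+1) - int a}"
      by (rule card_Un_disjoint) auto
    also have "\<dots> = 2 * (d + 1 - a)" using a by simp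
    finally show "card ({-(int (d+1) - int a)..-1} \<union> {1..int (d+1) - int a}) = 2 * (d + 1 - a)" .
  qed simp
  finally show ?thesis using sum_aux by simp
qed

lemma W_props: "w \<in> W d \<Longrightarrow> 1 \<le> fst w \<and> fst w \<le> d + 1 \<and> snd w \<noteq> 0 \<and> \<bar>snd w\<bar> \<le> int d"
  by (auto simp: W_def)

lemma Xev_iff:
  assumes "\<pi> permutes {1..n}"
  shows "Xev n d \<pi> i \<longleftrightarrow> (\<exists>w\<in>W d. cst n \<pi> i w)"
proof
  assume "Xev n d \<pi> i"
  then obtain j where j: "j \<in> {i<..n}" "close_pair d \<pi> i j" by (auto simp: Xev_def)
  have "\<pi> j \<noteq> \<pi> i" using permutes_inj[OF assms] j(1) by (auto simp: inj_def)
  then have "(j - i, int (\<pi> j) - int (\<pi> i)) \<in> W d" "cst n \<pi> i (j - i, int (\<pi> j) - int (\<pi> i))"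
    using j by (auto simp: W_def cst_def close_pair_def)
  then show "\<exists>w\<in>W d. cst n \<pi> i w" by blast
next
  assume "\<exists>w\<in>W d. cst n \<pi> i w"
  then obtain a b where w: "(a,b) \<in> W d" "cst n \<pi> i (a,b)" by auto
  then have "i + a \<in> {i<..n}" "close_pair d \<pi> i (i + a)"
    by (auto simp: W_def cst_def close_pair_def)
  then show "Xev n d \<pi> i" by (auto simp: Xev_def)
qed

lemma pow_fact_mono:
  fixes n :: nat
  assumes "v \<le> u" "u \<le> n"
  shows "n ^ v * fact (n - v) \<le> (n ^ u * fact (n - u) :: nat)"
  using assms
proof (induction u rule: dec_induct)
  case base then show ?case by simp
next
  case (step u)
  obtain k where k: "n - u = Suc k" "n - Suc u = k" using step by (metis Suc_diff_Suc Suc_le_eq diff_Suc_1)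
  have kn: "Suc k \<le> n" using k by arith
  have f: "fact (n - u) \<le> n * (fact (n - Suc u) :: nat)"
  proof -
    have "fact (Suc k) = Suc k * (fact k :: nat)" by simp
    also have "\<dots> \<le> n * fact k" using kn by (rule mult_le_mono1)
    finally show ?thesis unfolding k .
  qed
  have "n ^ v * fact (n - v) \<le> n ^ u * (fact (n - u) :: nat)" using step by simp
  also have "\<dots> \<le> n ^ u * (n * fact (n - Suc u))" using f by (rule mult_left_mono) simp
  also have "\<dots> = n ^ Suc u * fact (n - Suc u)" by simp
  finally show ?case .
qed

lemma det_bound:
  fixes n :: nat
  assumes V: "V \<subseteq> {1..n}" and RV: "R \<subseteq> V"
    and resp: "\<And>\<pi> \<pi>'. (\<forall>x\<in>V. \<pi> x = \<pi>' x) \<Longrightarrow> P \<pi> \<Longrightarrow> P \<pi>'"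
    and det: "\<And>\<pi> \<pi>'. \<pi> permutes {1..n} \<Longrightarrow> P \<pi> \<Longrightarrow> \<pi>' permutes {1..n} \<Longrightarrow> P \<pi>'
               \<Longrightarrow> (\<forall>x\<in>R. \<pi> x = \<pi>' x) \<Longrightarrow> (\<forall>x\<in>V. \<pi> x = \<pi>' x)"
  shows "card {\<pi>. \<pi> permutes {1..n} \<and> P \<pi>} \<le> n ^ card R * fact (n - card V)"
proof -
  define A where "A = {\<pi>. \<pi> permutes {1..n} \<and> P \<pi>}"
  define img where "img = (\<lambda>\<pi>. restrict \<pi> V) ` A"
  have c: "card A = card img * fact (n - card V)"
    unfolding A_def img_def
  proof (rule count_restrict[OF V])
    fix \<pi> \<pi>' assume h1: "\<forall>x\<in>V. \<pi> x = \<pi>' x" and h2: "P \<pi>"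
    show "P \<pi>'" by (rule resp[OF h1 h2])
  qed
  have finR: "finite R" by (rule finite_subset[OF RV], rule finite_subset[OF V]) simp
  have "card img \<le> card (PiE R (\<lambda>_. {1..n}))"
  proof (rule card_inj_on_le[where f="\<lambda>h. restrict h R"])
    show "inj_on (\<lambda>h. restrict h R) img"
    proof (rule inj_onI)
      fix h h' assume h: "h \<in> img" "h' \<in> img" and eq: "restrict h R = restrict h' R"
      obtain p where p: "p \<in> A" "h = restrict p V" using h(1) by (auto simp: img_def)
      obtain p' where p': "p' \<in> A" "h' = restrict p' V" using h(2) by (auto simp: img_def)
      have "\<forall>x\<in>R. p x = p' x"
      proof
        fix x assume x: "x \<in> R"
        have "restrict h R x = restrict h' R x" using eq by simp
        then show "p x = p' x" using x RV p(2) p'(2) by auto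
      qed
      then have "\<forall>x\<in>V. p x = p' x" using det p(1) p'(1) by (auto simp: A_def)
      then show "h = h'" using p(2) p'(2) by (auto simp: restrict_def fun_eq_iff)
    qed
    show "(\<lambda>h. restrict h R) ` img \<subseteq> PiE R (\<lambda>_. {1..n})"
    proof
      fix y assume "y \<in> (\<lambda>h. restrict h R) ` img"
      then obtain p where p: "p \<in> A" "y = restrict (restrict p V) R" by (auto simp: img_def)
      have "\<forall>x\<in>R. p x \<in> {1..n}" using p(1) V RV permutes_in_image[of p "{1..n}"] by (auto simp: A_def)
      then show "y \<in> PiE R (\<lambda>_. {1..n})" using p(2) RV by (auto simp: restrict_def PiE_def extensional_def)
    qed
    show "finite (PiE R (\<lambda>_. {1..n}))" using finR by (simp add: finite_PiE)
  qed
  also have "\<dots> = n ^ card R" using finR by (simp add: card_PiE)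
  finally show ?thesis using c A_def by simp
qed

definition Aw :: "nat \<Rightarrow> nat set \<Rightarrow> (nat \<Rightarrow> nat \<times> int) \<Rightarrow> (nat \<Rightarrow> nat) set" where
  "Aw n I w = {\<pi>. \<pi> permutes {1..n} \<and> (\<forall>i\<in>I. cst n \<pi> i (w i))}"

lemma PiE_W: "w \<in> PiE I (\<lambda>_. W d) \<Longrightarrow> i \<in> I \<Longrightarrow> 1 \<le> fst (w i) \<and> fst (w i) \<le> d + 1 \<and> snd (w i) \<noteq> 0 \<and> \<bar>snd (w i)\<bar> \<le> int d"
proof -
  assume "w \<in> PiE I (\<lambda>_. W d)" "i \<in> I"
  then have "w i \<in> W d" by (auto simp: PiE_def Pi_def)
  then show ?thesis using W_props by blast
qed

lemma C1:
  fixes n :: nat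
  assumes I: "I \<subseteq> {1..n}" and w: "w \<in> PiE I (\<lambda>_. W d)" and m: "card I = m" and mn: "2*m \<le> n"
  shows "card (Aw n I w) \<le> n^m * fact (n - 2*m)"
proof (cases "\<forall>i\<in>I. i + fst (w i) \<le> n")
  case False
  then have "Aw n I w = {}" by (auto simp: Aw_def cst_def)
  then show ?thesis by simp
next
  case True
  define J where "J = (\<lambda>i. i + fst (w i)) ` I"
  define V where "V = I \<union> J"
  have finI: "finite I" using I finite_subset by blast
  have fst1: "\<forall>i\<in>I. 1 \<le> fst (w i)" using PiE_W[OF w] by blast
  have V: "V \<subseteq> {1..n}" using I True by (auto simp: V_def J_def)
  have card_le: "card (Aw n I w) \<le> n ^ card (V - I) * fact (n - card V)"
    unfolding Aw_def
  proof (rule det_bound[OF V])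
    show "V - I \<subseteq> V" by auto
  next
    fix \<pi> \<pi>' assume agree: "\<forall>x\<in>V. \<pi> x = \<pi>' x" and P: "\<forall>i\<in>I. cst n \<pi> i (w i)"
    show "\<forall>i\<in>I. cst n \<pi>' i (w i)"
    proof
      fix i assume i: "i \<in> I"
      have "i \<in> V" "i + fst (w i) \<in> V" using i by (auto simp: V_def J_def)
      then show "cst n \<pi>' i (w i)" using P i agree by (auto simp: cst_def)
    qed
  next
    fix \<pi> \<pi>' assume P: "\<forall>i\<in>I. cst n \<pi> i (w i)" and P': "\<forall>i\<in>I. cst n \<pi>' i (w i)"
      and agree: "\<forall>x\<in>V - I. \<pi> x = \<pi>' x"
    have eqI: "\<forall>i\<in>I. \<pi> i = \<pi>' i"
    proof (rule ccontr)
      assume "\<not> (\<forall>i\<in>I. \<pi> i = \<pi>' i)"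
      define D where "D = {i\<in>I. \<pi> i \<noteq> \<pi>' i}"
      have D: "D \<noteq> {}" "finite D" using \<open>\<not> (\<forall>i\<in>I. \<pi> i = \<pi>' i)\<close> finI by (auto simp: D_def)
      define i0 where "i0 = Max D"
      have i0: "i0 \<in> D" using Max_in[OF D(2) D(1)] by (simp add: i0_def)
      define j where "j = i0 + fst (w i0)"
      have ij: "i0 < j" using fst1 i0 by (auto simp: D_def j_def)
      have "\<pi> j = \<pi>' j"
      proof (cases "j \<in> I")
        case True
        show ?thesis
        proof (rule ccontr)
          assume "\<pi> j \<noteq> \<pi>' j"
          then have "j \<in> D" using True by (simp add: D_def)
          then have "j \<le> i0" using Max_ge[OF D(2)] by (simp add: i0_def)
          then show False using ij by simp
        qed
      next
        case False
        then have "j \<in> V - I" using i0 by (auto simp: V_def J_def D_def j_def)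
        then show ?thesis using agree by simp
      qed
      moreover have "int (\<pi> j) = int (\<pi> i0) + snd (w i0)" "int (\<pi>' j) = int (\<pi>' i0) + snd (w i0)"
        using P P' i0 by (auto simp: D_def cst_def j_def)
      ultimately have "\<pi> i0 = \<pi>' i0" by simp
      then show False using i0 by (simp add: D_def)
    qed
    show "\<forall>x\<in>V. \<pi> x = \<pi>' x"
    proof
      fix x assume "x \<in> V"
      then show "\<pi> x = \<pi>' x" using eqI agree by (cases "x \<in> I") auto
    qed
  qed
  have finV: "finite V" using V finite_subset by blast
  have cV: "card V \<le> 2 * m"
  proof -
    have "card V \<le> card I + card J" unfolding V_def by (rule card_Un_le)
    moreover have "card J \<le> card I" unfolding J_def by (rule card_image_le[OF finI])
    ultimately show ?thesis using m by simp
  qed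
  have cV2: "m \<le> card V" using m card_mono[OF finV, of I] by (auto simp: V_def)
  have cR: "card (V - I) = card V - m" using m finV by (simp add: card_Diff_subset V_def finI)
  have mono: "n ^ card V * fact (n - card V) \<le> n ^ (2*m) * (fact (n - 2*m) :: nat)"
    by (rule pow_fact_mono[OF cV mn])
  have npos: "n ^ m > 0" using mn by (cases "n = 0") auto
  have "n ^ m * (n ^ (card V - m) * fact (n - card V)) = n ^ card V * (fact (n - card V) :: nat)"
    using cV2 by (simp add: power_add[symmetric])
  also have "\<dots> \<le> n ^ m * (n ^ m * fact (n - 2*m))" using mono by (simp add: power_add mult_2 mult.assoc)
  finally have "n ^ m * (n ^ (card V - m) * fact (n - card V)) \<le> n ^ m * (n ^ m * (fact (n - 2*m) :: nat))" .
  then have "n ^ (card V - m) * fact (n - card V) \<le> n ^ m * (fact (n - 2*m) :: nat)"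
    using npos mult_le_cancel1 by blast
  then show ?thesis using card_le cR by simp
qed

lemma upper_I:
  fixes n :: nat
  assumes I: "I \<subseteq> {1..n}"
  shows "card {\<pi>. \<pi> permutes {1..n} \<and> (\<forall>i\<in>I. Xev n d \<pi> i)} \<le> (\<Sum>w\<in>PiE I (\<lambda>_. W d). card (Aw n I w))"
proof -
  have finI: "finite I" using I finite_subset by blast
  have fin: "finite (PiE I (\<lambda>_. W d))" using finI finite_W by (simp add: finite_PiE)
  have "{\<pi>. \<pi> permutes {1..n} \<and> (\<forall>i\<in>I. Xev n d \<pi> i)} \<subseteq> (\<Union>w\<in>PiE I (\<lambda>_. W d). Aw n I w)"
  proof
    fix \<pi> assume "\<pi> \<in> {\<pi>. \<pi> permutes {1..n} \<and> (\<forall>i\<in>I. Xev n d \<pi> i)}"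
    then have p: "\<pi> permutes {1..n}" "\<forall>i\<in>I. \<exists>u\<in>W d. cst n \<pi> i u" using Xev_iff by auto
    define w where "w = restrict (\<lambda>i. SOME u. u \<in> W d \<and> cst n \<pi> i u) I"
    have "\<forall>i\<in>I. w i \<in> W d \<and> cst n \<pi> i (w i)"
    proof
      fix i assume i: "i \<in> I"
      then have "\<exists>u. u \<in> W d \<and> cst n \<pi> i u" using p(2) by blast
      then have "(SOME u. u \<in> W d \<and> cst n \<pi> i u) \<in> W d \<and> cst n \<pi> i (SOME u. u \<in> W d \<and> cst n \<pi> i u)"
        by (rule someI_ex)
      then show "w i \<in> W d \<and> cst n \<pi> i (w i)" using i by (simp add: w_def)
    qed
    then have "w \<in> PiE I (\<lambda>_. W d)" "\<pi> \<in> Aw n I w" using p(1) by (auto simp: w_def Aw_def)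
    then show "\<pi> \<in> (\<Union>w\<in>PiE I (\<lambda>_. W d). Aw n I w)" by blast
  qed
  then have "card {\<pi>. \<pi> permutes {1..n} \<and> (\<forall>i\<in>I. Xev n d \<pi> i)} \<le> card (\<Union>w\<in>PiE I (\<lambda>_. W d). Aw n I w)"
  proof (rule card_mono[rotated])
    show "finite (\<Union>w\<in>PiE I (\<lambda>_. W d). Aw n I w)"
    proof (rule finite_UN_I[OF fin])
      fix w show "finite (Aw n I w)" unfolding Aw_def by (rule finite_perms)
    qed
  qed
  also have "\<dots> \<le> (\<Sum>w\<in>PiE I (\<lambda>_. W d). card (Aw n I w))" by (rule card_UN_le[OF fin])
  finally show ?thesis .
qed

lemma upper_I2:
  fixes n :: nat
  assumes I: "I \<subseteq> {1..n}" and m: "card I = m" and mn: "2*m \<le> n"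
  shows "card {\<pi>. \<pi> permutes {1..n} \<and> (\<forall>i\<in>I. Xev n d \<pi> i)} \<le> (d*d+d)^m * (n^m * fact (n - 2*m))"
proof -
  have finI: "finite I" using I finite_subset by blast
  have "(\<Sum>w\<in>PiE I (\<lambda>_. W d). card (Aw n I w)) \<le> (\<Sum>w\<in>PiE I (\<lambda>_. W d). n^m * fact (n - 2*m))"
    by (rule sum_mono, rule C1[OF I _ m mn])
  also have "\<dots> = (d*d+d)^m * (n^m * fact (n - 2*m))"
    using finI m by (simp add: card_PiE card_W)
  finally show ?thesis using upper_I[OF I, of d] by simp
qed

definition Aw2 :: "nat \<Rightarrow> nat set \<Rightarrow> (nat \<Rightarrow> nat \<times> int) \<Rightarrow> nat \<Rightarrow> nat \<times> int \<Rightarrow> (nat \<Rightarrow> nat) set" where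
  "Aw2 n I w k u = {\<pi>. \<pi> permutes {1..n} \<and> (\<forall>i\<in>I. cst n \<pi> i (w i)) \<and> cst n \<pi> k u}"

lemma ind_ge:
  assumes "finite I"
  shows "(\<Prod>i\<in>I. real (N i)) - (\<Sum>k\<in>I. (real (N k) - 1) * (\<Prod>i\<in>I. real (N i)))
         \<le> (if \<forall>i\<in>I. N i \<ge> 1 then 1 else 0)"
proof (cases "\<exists>i\<in>I. N i = 0")
  case True
  then have "(\<Prod>i\<in>I. real (N i)) = 0" using assms by (auto simp: prod_zero_iff)
  then show ?thesis by simp
next
  case False
  then have all: "\<forall>i\<in>I. N i \<ge> 1" by (simp add: Suc_le_eq)
  have P1: "(\<Prod>i\<in>I. real (N i)) \<ge> 1" using all by (intro prod_ge_1) auto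
  show ?thesis
  proof (cases "\<exists>k\<in>I. N k \<ge> 2")
    case True
    then obtain k where k: "k \<in> I" "N k \<ge> 2" by blast
    have "(real (N k) - 1) * (\<Prod>i\<in>I. real (N i)) \<le> (\<Sum>k\<in>I. (real (N k) - 1) * (\<Prod>i\<in>I. real (N i)))"
      by (rule member_le_sum[OF k(1)]) (use all P1 assms in auto)
    moreover have "(\<Prod>i\<in>I. real (N i)) \<le> (real (N k) - 1) * (\<Prod>i\<in>I. real (N i))"
      using k(2) P1 by (simp add: mult_le_cancel_right1)
    ultimately show ?thesis using all by simp
  next
    case False
    then have "\<forall>i\<in>I. N i = 1" using all by force
    then show ?thesis by simp
  qed
qed

lemma sum_ind_card:
  "finite P \<Longrightarrow> (\<Sum>x\<in>P. if Q x then 1 else 0 :: real) = real (card {x\<in>P. Q x})"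
  by (simp add: sum.If_cases Int_def conj_commute)

lemma card_PiE_filter:
  assumes "finite I" "finite S"
  shows "(\<Prod>i\<in>I. real (card {u\<in>S. Q i u})) = (\<Sum>w\<in>PiE I (\<lambda>_. S). if \<forall>i\<in>I. Q i (w i) then 1 else 0)"
proof -
  have "PiE I (\<lambda>i. {u\<in>S. Q i u}) = {w\<in>PiE I (\<lambda>_. S). \<forall>i\<in>I. Q i (w i)}"
    by (auto simp: PiE_def Pi_def)
  then have "card (PiE I (\<lambda>i. {u\<in>S. Q i u})) = card {w\<in>PiE I (\<lambda>_. S). \<forall>i\<in>I. Q i (w i)}" by simp
  moreover have "card (PiE I (\<lambda>i. {u\<in>S. Q i u})) = (\<Prod>i\<in>I. card {u\<in>S. Q i u})"
    using assms(1) by (rule card_PiE)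
  moreover have "finite (PiE I (\<lambda>_. S))" using assms by (simp add: finite_PiE)
  ultimately have eq: "(\<Prod>i\<in>I. card {u\<in>S. Q i u}) = card {w\<in>PiE I (\<lambda>_. S). \<forall>i\<in>I. Q i (w i)}"
    and fin: "finite (PiE I (\<lambda>_. S))" by simp_all
  have "(\<Prod>i\<in>I. real (card {u\<in>S. Q i u})) = real (\<Prod>i\<in>I. card {u\<in>S. Q i u})" by simp
  also have "\<dots> = real (card {w\<in>PiE I (\<lambda>_. S). \<forall>i\<in>I. Q i (w i)})" using eq by simp
  also have "\<dots> = (\<Sum>w\<in>PiE I (\<lambda>_. S). if \<forall>i\<in>I. Q i (w i) then 1 else 0)"
    by (rule sum_ind_card[OF fin, symmetric])
  finally show ?thesis .
qed

definition NN where "NN n d \<pi> i = card {u\<in>W d. cst n \<pi> i u}"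

lemma ind_X:
  assumes "\<pi> permutes {1..n}"
  shows "(\<forall>i\<in>I. Xev n d \<pi> i) \<longleftrightarrow> (\<forall>i\<in>I. NN n d \<pi> i \<ge> 1)"
proof -
  have "Xev n d \<pi> i \<longleftrightarrow> NN n d \<pi> i \<ge> 1" for i
    unfolding Xev_iff[OF assms] NN_def using finite_W[of d]
    by (auto simp: Suc_le_eq card_gt_0_iff)
  then show ?thesis by simp
qed

lemma sumA:
  assumes I: "finite I"
  shows "(\<Sum>\<pi>\<in>{\<pi>. \<pi> permutes {1..n}}. \<Prod>i\<in>I. real (NN n d \<pi> i))
       = (\<Sum>w\<in>PiE I (\<lambda>_. W d). real (card (Aw n I w)))"
proof -
  have fP: "finite {\<pi>. \<pi> permutes {1..n}}" by (rule finite_permutations) simp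
  have "(\<Sum>\<pi>\<in>{\<pi>. \<pi> permutes {1..n}}. \<Prod>i\<in>I. real (NN n d \<pi> i))
      = (\<Sum>\<pi>\<in>{\<pi>. \<pi> permutes {1..n}}. \<Sum>w\<in>PiE I (\<lambda>_. W d). if \<forall>i\<in>I. cst n \<pi> i (w i) then 1 else 0)"
    unfolding NN_def by (rule sum.cong[OF refl], rule card_PiE_filter[OF I finite_W])
  also have "\<dots> = (\<Sum>w\<in>PiE I (\<lambda>_. W d). \<Sum>\<pi>\<in>{\<pi>. \<pi> permutes {1..n}}. if \<forall>i\<in>I. cst n \<pi> i (w i) then 1 else 0)"
    by (rule sum.swap)
  also have "\<dots> = (\<Sum>w\<in>PiE I (\<lambda>_. W d). real (card (Aw n I w)))"
    by (rule sum.cong[OF refl], subst sum_ind_card[OF fP]) (simp add: Aw_def)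
  finally show ?thesis .
qed

lemma sumB:
  assumes I: "finite I" and k: "k \<in> I"
  shows "(\<Sum>\<pi>\<in>{\<pi>. \<pi> permutes {1..n}}. (real (NN n d \<pi> k) - 1) * (\<Prod>i\<in>I. real (NN n d \<pi> i)))
       = (\<Sum>w\<in>PiE I (\<lambda>_. W d). \<Sum>u\<in>W d - {w k}. real (card (Aw2 n I w k u)))"
proof -
  have fP: "finite {\<pi>. \<pi> permutes {1..n}}" by (rule finite_permutations) simp
  have fW: "finite (W d - {x})" for x using finite_W by simp
  have step: "(real (NN n d \<pi> k) - 1) * (\<Prod>i\<in>I. real (NN n d \<pi> i))
      = (\<Sum>w\<in>PiE I (\<lambda>_. W d). \<Sum>u\<in>W d - {w k}. if (\<forall>i\<in>I. cst n \<pi> i (w i)) \<and> cst n \<pi> k u then 1 else 0)" for \<pi>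
  proof -
    have "(real (NN n d \<pi> k) - 1) * (\<Prod>i\<in>I. real (NN n d \<pi> i))
        = (\<Sum>w\<in>PiE I (\<lambda>_. W d). (real (NN n d \<pi> k) - 1) * (if \<forall>i\<in>I. cst n \<pi> i (w i) then 1 else 0))"
      unfolding NN_def by (subst card_PiE_filter[OF I finite_W]) (simp add: sum_distrib_left)
    also have "\<dots> = (\<Sum>w\<in>PiE I (\<lambda>_. W d). \<Sum>u\<in>W d - {w k}. if (\<forall>i\<in>I. cst n \<pi> i (w i)) \<and> cst n \<pi> k u then 1 else 0)"
    proof (rule sum.cong[OF refl])
      fix w assume w: "w \<in> PiE I (\<lambda>_. W d)"
      show "(real (NN n d \<pi> k) - 1) * (if \<forall>i\<in>I. cst n \<pi> i (w i) then 1 else 0)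
          = (\<Sum>u\<in>W d - {w k}. if (\<forall>i\<in>I. cst n \<pi> i (w i)) \<and> cst n \<pi> k u then 1 else 0)"
      proof (cases "\<forall>i\<in>I. cst n \<pi> i (w i)")
        case True
        have wk: "w k \<in> {u\<in>W d. cst n \<pi> k u}" using True k w by (auto simp: PiE_def Pi_def)
        have "(\<Sum>u\<in>W d - {w k}. if (\<forall>i\<in>I. cst n \<pi> i (w i)) \<and> cst n \<pi> k u then 1 else 0 :: real)
            = real (card {u\<in>W d - {w k}. cst n \<pi> k u})"
          using True by (simp add: sum_ind_card[OF fW])
        also have "{u\<in>W d - {w k}. cst n \<pi> k u} = {u\<in>W d. cst n \<pi> k u} - {w k}" by auto
        also have "real (card \<dots>) = real (NN n d \<pi> k) - 1"
        proof -
          have fX: "finite {u\<in>W d. cst n \<pi> k u}" using finite_W by simp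
          have ne: "{u\<in>W d. cst n \<pi> k u} \<noteq> {}" using wk by blast
          have "card {u\<in>W d. cst n \<pi> k u} > 0" using fX ne card_gt_0_iff by blast
          then have pos: "card {u\<in>W d. cst n \<pi> k u} \<ge> 1" by linarith
          have "card ({u\<in>W d. cst n \<pi> k u} - {w k}) = card {u\<in>W d. cst n \<pi> k u} - 1"
            using wk fX by (simp add: card_Diff_singleton)
          then show ?thesis using pos by (simp add: NN_def of_nat_diff)
        qed
        finally show ?thesis using True by simp
      next
        case False
        have "(\<Sum>u\<in>W d - {w k}. if (\<forall>i\<in>I. cst n \<pi> i (w i)) \<and> cst n \<pi> k u then 1 else 0 :: real) = 0"
          using False by (intro sum.neutral ballI) auto
        moreover have "(if \<forall>i\<in>I. cst n \<pi> i (w i) then 1 else 0 :: real) = 0" using False by simp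
        ultimately show ?thesis by simp
      qed
    qed
    finally show ?thesis .
  qed
  have "(\<Sum>\<pi>\<in>{\<pi>. \<pi> permutes {1..n}}. (real (NN n d \<pi> k) - 1) * (\<Prod>i\<in>I. real (NN n d \<pi> i)))
      = (\<Sum>\<pi>\<in>{\<pi>. \<pi> permutes {1..n}}. \<Sum>w\<in>PiE I (\<lambda>_. W d). \<Sum>u\<in>W d - {w k}. if (\<forall>i\<in>I. cst n \<pi> i (w i)) \<and> cst n \<pi> k u then 1 else 0)"
    using step by simp
  also have "\<dots> = (\<Sum>w\<in>PiE I (\<lambda>_. W d). \<Sum>\<pi>\<in>{\<pi>. \<pi> permutes {1..n}}. \<Sum>u\<in>W d - {w k}. if (\<forall>i\<in>I. cst n \<pi> i (w i)) \<and> cst n \<pi> k u then 1 else 0)"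
    by (rule sum.swap)
  also have "\<dots> = (\<Sum>w\<in>PiE I (\<lambda>_. W d). \<Sum>u\<in>W d - {w k}. \<Sum>\<pi>\<in>{\<pi>. \<pi> permutes {1..n}}. if (\<forall>i\<in>I. cst n \<pi> i (w i)) \<and> cst n \<pi> k u then 1 else 0)"
    by (rule sum.cong[OF refl], rule sum.swap)
  also have "\<dots> = (\<Sum>w\<in>PiE I (\<lambda>_. W d). \<Sum>u\<in>W d - {w k}. real (card (Aw2 n I w k u)))"
    by (rule sum.cong[OF refl], rule sum.cong[OF refl], subst sum_ind_card[OF fP]) (simp add: Aw2_def)
  finally show ?thesis .
qed

lemma lower_I:
  fixes n :: nat
  assumes I: "finite I"
  shows "real (card {\<pi>. \<pi> permutes {1..n} \<and> (\<forall>i\<in>I. Xev n d \<pi> i)})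
     \<ge> (\<Sum>w\<in>PiE I (\<lambda>_. W d). real (card (Aw n I w)))
       - (\<Sum>k\<in>I. \<Sum>w\<in>PiE I (\<lambda>_. W d). \<Sum>u\<in>W d - {w k}. real (card (Aw2 n I w k u)))"
proof -
  have fP: "finite {\<pi>. \<pi> permutes {1..n}}" by (rule finite_permutations) simp
  have "real (card {\<pi>. \<pi> permutes {1..n} \<and> (\<forall>i\<in>I. Xev n d \<pi> i)})
      = real (card {\<pi>\<in>{\<pi>. \<pi> permutes {1..n}}. (\<forall>i\<in>I. NN n d \<pi> i \<ge> 1)})"
    using ind_X by (metis (no_types, lifting) mem_Collect_eq)
  also have "\<dots> = (\<Sum>\<pi>\<in>{\<pi>. \<pi> permutes {1..n}}. if \<forall>i\<in>I. NN n d \<pi> i \<ge> 1 then 1 else 0)"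
    by (rule sum_ind_card[OF fP, symmetric])
  also have "\<dots> \<ge> (\<Sum>\<pi>\<in>{\<pi>. \<pi> permutes {1..n}}. (\<Prod>i\<in>I. real (NN n d \<pi> i))
          - (\<Sum>k\<in>I. (real (NN n d \<pi> k) - 1) * (\<Prod>i\<in>I. real (NN n d \<pi> i))))"
    by (rule sum_mono, rule ind_ge[OF I])
  also have "(\<Sum>\<pi>\<in>{\<pi>. \<pi> permutes {1..n}}. (\<Prod>i\<in>I. real (NN n d \<pi> i))
          - (\<Sum>k\<in>I. (real (NN n d \<pi> k) - 1) * (\<Prod>i\<in>I. real (NN n d \<pi> i))))
      = (\<Sum>w\<in>PiE I (\<lambda>_. W d). real (card (Aw n I w)))
       - (\<Sum>k\<in>I. \<Sum>w\<in>PiE I (\<lambda>_. W d). \<Sum>u\<in>W d - {w k}. real (card (Aw2 n I w k u)))"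
  proof -
    have "(\<Sum>\<pi>\<in>{\<pi>. \<pi> permutes {1..n}}. \<Sum>k\<in>I. (real (NN n d \<pi> k) - 1) * (\<Prod>i\<in>I. real (NN n d \<pi> i)))
        = (\<Sum>k\<in>I. \<Sum>\<pi>\<in>{\<pi>. \<pi> permutes {1..n}}. (real (NN n d \<pi> k) - 1) * (\<Prod>i\<in>I. real (NN n d \<pi> i)))"
      by (rule sum.swap)
    also have "\<dots> = (\<Sum>k\<in>I. \<Sum>w\<in>PiE I (\<lambda>_. W d). \<Sum>u\<in>W d - {w k}. real (card (Aw2 n I w k u)))"
      by (rule sum.cong[OF refl], rule sumB[OF I])
    finally show ?thesis by (simp only: sum_subtractf sumA[OF I])
  qed
  finally show ?thesis .
qed

definition good :: "nat \<Rightarrow> nat \<Rightarrow> nat set \<Rightarrow> bool" where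
  "good n d I \<longleftrightarrow> (\<forall>i\<in>I. 1 \<le> i \<and> i + d + 1 \<le> n) \<and> (\<forall>i\<in>I. \<forall>i'\<in>I. i < i' \<longrightarrow> i + d + 1 < i')"

lemma good_sep:
  assumes "good n d I" "i \<in> I" "i' \<in> I" "1 \<le> a" "a \<le> d+1" "1 \<le> a'" "a' \<le> d+1" "i + a = i' + a'"
  shows "i = i'"
proof (rule ccontr)
  assume "i \<noteq> i'"
  then consider "i < i'" | "i' < i" by arith
  then show False
  proof cases
    case 1
    then have "i + d + 1 < i'" using assms(1-3) unfolding good_def by blast
    then show False using assms(4-8) by linarith
  next
    case 2
    then have "i' + d + 1 < i" using assms(1-3) unfolding good_def by blast
    then show False using assms(4-8) by linarith
  qed
qed

lemma good_notin:
  assumes "good n d I" "i \<in> I" "1 \<le> a" "a \<le> d+1"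
  shows "i + a \<notin> I"
proof
  assume h: "i + a \<in> I"
  have "i < i + a" using assms by simp
  then have "i + d + 1 < i + a" using assms(1,2) h unfolding good_def by blast
  then show False using assms by simp
qed

lemma C3:
  fixes n :: nat
  assumes g: "good n d I" and m: "card I = m" and w: "w \<in> PiE I (\<lambda>_. W d)"
    and k: "k \<in> I" and u: "u \<in> W d - {w k}" and mn: "2*m+1 \<le> n"
  shows "card (Aw2 n I w k u) \<le> n^m * fact (n - (2*m+1))"
proof (cases "fst u = fst (w k)")
  case True
  have "Aw2 n I w k u = {}"
  proof (rule ccontr)
    assume "Aw2 n I w k u \<noteq> {}"
    then obtain \<pi> where "\<forall>i\<in>I. cst n \<pi> i (w i)" "cst n \<pi> k u" by (auto simp: Aw2_def)
    then have "snd u = snd (w k)" using k True by (auto simp: cst_def)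
    then show False using True u by (metis DiffE insertI1 prod.expand)
  qed
  then show ?thesis by simp
next
  case False
  have Iin: "\<forall>i\<in>I. 1 \<le> i \<and> i + d + 1 \<le> n" using g by (simp add: good_def)
  have finI: "finite I"
  proof (rule finite_subset[of I "{1..n}"])
    show "I \<subseteq> {1..n}" using Iin by auto
  qed simp
  have wp: "\<And>i. i \<in> I \<Longrightarrow> 1 \<le> fst (w i) \<and> fst (w i) \<le> d + 1 \<and> snd (w i) \<noteq> 0 \<and> \<bar>snd (w i)\<bar> \<le> int d"
    using PiE_W[OF w] by blast
  have up: "1 \<le> fst u \<and> fst u \<le> d + 1" using u W_props by blast
  define J where "J = (\<lambda>i. i + fst (w i)) ` I"
  define x where "x = k + fst u"
  define V where "V = insert x (I \<union> J)"
  have V: "V \<subseteq> {1..n}"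
  proof
    fix y assume "y \<in> V"
    then show "y \<in> {1..n}" unfolding V_def J_def x_def using Iin wp up k by fastforce
  qed
  have injJ: "inj_on (\<lambda>i. i + fst (w i)) I"
    by (rule inj_onI) (use good_sep[OF g] wp in blast)
  have cJ: "card J = m" using card_image[OF injJ] m by (simp add: J_def)
  have IJ: "I \<inter> J = {}" using good_notin[OF g] wp by (auto simp: J_def)
  have xI: "x \<notin> I" using good_notin[OF g k] up by (simp add: x_def)
  have xJ: "x \<notin> J"
  proof
    assume "x \<in> J"
    then obtain i where i: "i \<in> I" "k + fst u = i + fst (w i)" by (auto simp: J_def x_def)
    then have "k = i" using good_sep[OF g k i(1)] up wp[OF i(1)] by blast
    then show False using i False by simp
  qed
  have finJ: "finite J" using finI by (simp add: J_def)
  have cV: "card V = 2*m+1"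
    using xI xJ IJ finI finJ m cJ by (simp add: V_def card_Un_disjoint)
  have "card (Aw2 n I w k u) \<le> n ^ card J * fact (n - card V)"
    unfolding Aw2_def
  proof (rule det_bound[OF V])
    show "J \<subseteq> V" by (auto simp: V_def)
  next
    fix \<pi> \<pi>' assume agree: "\<forall>y\<in>V. \<pi> y = \<pi>' y"
      and P: "(\<forall>i\<in>I. cst n \<pi> i (w i)) \<and> cst n \<pi> k u"
    have a1: "\<forall>i\<in>I. \<pi> i = \<pi>' i \<and> \<pi> (i + fst (w i)) = \<pi>' (i + fst (w i))"
      using agree by (auto simp: V_def J_def)
    have a2: "\<pi> k = \<pi>' k" "\<pi> x = \<pi>' x" using agree k by (auto simp: V_def)
    show "(\<forall>i\<in>I. cst n \<pi>' i (w i)) \<and> cst n \<pi>' k u"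
      using P a1 a2 k by (auto simp: cst_def x_def)
  next
    fix \<pi> \<pi>' assume P: "(\<forall>i\<in>I. cst n \<pi> i (w i)) \<and> cst n \<pi> k u"
      and P': "(\<forall>i\<in>I. cst n \<pi>' i (w i)) \<and> cst n \<pi>' k u"
      and agree: "\<forall>y\<in>J. \<pi> y = \<pi>' y"
    have eqI: "\<forall>i\<in>I. \<pi> i = \<pi>' i"
    proof
      fix i assume i: "i \<in> I"
      have "\<pi> (i + fst (w i)) = \<pi>' (i + fst (w i))" using agree i by (auto simp: J_def)
      moreover have "int (\<pi> (i + fst (w i))) = int (\<pi> i) + snd (w i)"
        "int (\<pi>' (i + fst (w i))) = int (\<pi>' i) + snd (w i)" using P P' i by (auto simp: cst_def)
      ultimately show "\<pi> i = \<pi>' i" by simp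
    qed
    have "int (\<pi> x) = int (\<pi> k) + snd u" "int (\<pi>' x) = int (\<pi>' k) + snd u"
      using P P' by (auto simp: cst_def x_def)
    then have "\<pi> x = \<pi>' x" using eqI k by simp
    then show "\<forall>y\<in>V. \<pi> y = \<pi>' y" using eqI agree by (auto simp: V_def)
  qed
  then show ?thesis using cJ cV by simp
qed

lemma card_coll:
  assumes I: "finite I" and S: "finite S" and i: "i \<in> I" and i': "i' \<in> I" and ne: "i \<noteq> i'"
  shows "card {g\<in>PiE I (\<lambda>_. S). int (g i) = int (g i') + c} \<le> card S ^ (card I - 1)"
proof -
  have "card {g\<in>PiE I (\<lambda>_. S). int (g i) = int (g i') + c} \<le> card (PiE (I - {i}) (\<lambda>_. S))"
  proof (rule card_inj_on_le[where f="\<lambda>g. restrict g (I - {i})"])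
    show "inj_on (\<lambda>g. restrict g (I - {i})) {g\<in>PiE I (\<lambda>_. S). int (g i) = int (g i') + c}"
    proof (rule inj_onI)
      fix g g' assume g: "g \<in> {g\<in>PiE I (\<lambda>_. S). int (g i) = int (g i') + c}"
        and g': "g' \<in> {g\<in>PiE I (\<lambda>_. S). int (g i) = int (g i') + c}"
        and eq: "restrict g (I - {i}) = restrict g' (I - {i})"
      have a: "\<forall>x\<in>I - {i}. g x = g' x"
      proof
        fix x assume x: "x \<in> I - {i}"
        have "restrict g (I - {i}) x = restrict g' (I - {i}) x" using eq by simp
        then show "g x = g' x" using x by simp
      qed
      then have "g i' = g' i'" using i' ne by simp
      then have "g i = g' i" using g g' by simp
      then have "\<forall>x\<in>I. g x = g' x" using a by blast
      then show "g = g'" using g g' by (auto intro: PiE_ext)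
    qed
    show "(\<lambda>g. restrict g (I - {i})) ` {g\<in>PiE I (\<lambda>_. S). int (g i) = int (g i') + c} \<subseteq> PiE (I - {i}) (\<lambda>_. S)"
      by (auto simp: PiE_def Pi_def)
    show "finite (PiE (I - {i}) (\<lambda>_. S))" using I S by (simp add: finite_PiE)
  qed
  also have "\<dots> = card S ^ (card I - 1)" using I i by (simp add: card_PiE)
  finally show ?thesis .
qed

definition coll :: "nat set \<Rightarrow> (nat \<Rightarrow> nat \<times> int) \<Rightarrow> (nat \<Rightarrow> nat) \<Rightarrow> bool" where
  "coll I w g \<longleftrightarrow> (\<exists>i\<in>I. \<exists>i'\<in>I. i \<noteq> i' \<and>
     (int (g i) = int (g i') + 0 \<or> int (g i) = int (g i') + snd (w i') \<or> int (g i) = int (g i') + (snd (w i') - snd (w i))))"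

lemma card_G:
  assumes I: "finite I" and m: "card I = m" and S: "finite S"
  shows "real (card {g\<in>PiE I (\<lambda>_. S). \<not> coll I w g}) \<ge> real (card S) ^ m - 3 * real m ^ 2 * real (card S) ^ (m - 1)"
proof -
  define All where "All = PiE I (\<lambda>_. S)"
  define B where "B i i' c = {g\<in>All. int (g i) = int (g i') + c}" for i i' c
  define C where "C i i' = {0, snd (w i'), snd (w i') - snd (w i)}" for i i'
  have finAll: "finite All" using I S by (simp add: All_def finite_PiE)
  have sub: "{g\<in>All. coll I w g} \<subseteq> (\<Union>i\<in>I. \<Union>i'\<in>I - {i}. \<Union>c\<in>C i i'. B i i' c)"
    by (auto simp: coll_def B_def C_def)
  have cB: "card (B i i' c) \<le> card S ^ (m - 1)" if "i \<in> I" "i' \<in> I - {i}" for i i' c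
    using card_coll[OF I S, of i i' c] that m by (simp add: B_def All_def)
  have "card {g\<in>All. coll I w g} \<le> card (\<Union>i\<in>I. \<Union>i'\<in>I - {i}. \<Union>c\<in>C i i'. B i i' c)"
    by (rule card_mono[OF _ sub]) (use finAll in \<open>auto simp: B_def intro!: finite_UN_I simp: C_def I\<close>)
  also have "\<dots> \<le> (\<Sum>i\<in>I. card (\<Union>i'\<in>I - {i}. \<Union>c\<in>C i i'. B i i' c))" by (rule card_UN_le[OF I])
  also have "\<dots> \<le> (\<Sum>i\<in>I. \<Sum>i'\<in>I - {i}. card (\<Union>c\<in>C i i'. B i i' c))"
    by (rule sum_mono, rule card_UN_le) (use I in simp)
  also have "\<dots> \<le> (\<Sum>i\<in>I. \<Sum>i'\<in>I - {i}. \<Sum>c\<in>C i i'. card (B i i' c))"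
    by (rule sum_mono, rule sum_mono, rule card_UN_le) (simp add: C_def)
  also have "\<dots> \<le> (\<Sum>i\<in>I. \<Sum>i'\<in>I - {i}. 3 * card S ^ (m - 1))"
  proof (rule sum_mono, rule sum_mono)
    fix i i' assume i: "i \<in> I" and i': "i' \<in> I - {i}"
    have "(\<Sum>c\<in>C i i'. card (B i i' c)) \<le> (\<Sum>c\<in>C i i'. card S ^ (m - 1))"
      by (rule sum_mono, rule cB[OF i i'])
    also have "\<dots> = card (C i i') * card S ^ (m - 1)" by simp
    also have "\<dots> \<le> 3 * card S ^ (m - 1)"
    proof -
      have "C i i' = set [0, snd (w i'), snd (w i') - snd (w i)]" by (simp add: C_def)
      then have "card (C i i') \<le> 3" using card_length[of "[0, snd (w i'), snd (w i') - snd (w i)]"] by simp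
      then show ?thesis by simp
    qed
    finally show "(\<Sum>c\<in>C i i'. card (B i i' c)) \<le> 3 * card S ^ (m - 1)" .
  qed
  also have "\<dots> = m * (m - 1) * (3 * card S ^ (m - 1))" using I m by (simp add: card_Diff_subset)
  finally have bad: "card {g\<in>All. coll I w g} \<le> m * (m - 1) * (3 * card S ^ (m - 1))" .
  have "card All = card {g\<in>All. \<not> coll I w g} + card {g\<in>All. coll I w g}"
  proof -
    have "All = {g\<in>All. \<not> coll I w g} \<union> {g\<in>All. coll I w g}" by auto
    then show ?thesis using finAll by (metis (no_types, lifting) card_Un_disjoint disjoint_iff finite_Un mem_Collect_eq)
  qed
  moreover have "card All = card S ^ m" using I m by (simp add: All_def card_PiE)
  ultimately have e: "card S ^ m = card {g\<in>All. \<not> coll I w g} + card {g\<in>All. coll I w g}" by simp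
  have e2: "real (card S) ^ m = real (card {g\<in>All. \<not> coll I w g}) + real (card {g\<in>All. coll I w g})"
    using arg_cong[OF e, of real] by simp
  have b2: "real (card {g\<in>All. coll I w g}) \<le> real (m * (m - 1) * (3 * card S ^ (m - 1)))"
    using bad by (simp only: of_nat_le_iff)
  have "real (card S) ^ m \<le> real (card {g\<in>All. \<not> coll I w g}) + real (m * (m - 1) * (3 * card S ^ (m - 1)))"
    using e2 b2 by linarith
  moreover have "real (m * (m - 1) * (3 * card S ^ (m - 1))) \<le> 3 * real m ^ 2 * real (card S) ^ (m - 1)"
  proof -
    have "m * (m - 1) \<le> m ^ 2" by (simp add: power2_eq_square)
    then have "real (m * (m - 1)) \<le> real m ^ 2" by (metis of_nat_le_iff of_nat_power)
    then have "real (m * (m - 1)) * (3 * real (card S) ^ (m - 1)) \<le> real m ^ 2 * (3 * real (card S) ^ (m - 1))"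
      by (rule mult_right_mono) simp
    then show ?thesis by (simp add: mult_ac)
  qed
  ultimately show ?thesis unfolding All_def by linarith
qed

lemma C2:
  fixes n :: nat
  assumes g: "good n d I" and m: "card I = m" and w: "w \<in> PiE I (\<lambda>_. W d)"
  shows "real (card (Aw n I w)) \<ge> real (card {g\<in>PiE I (\<lambda>_. {d+1..n-d}). \<not> coll I w g}) * fact (n - 2*m)"
proof -
  have Iin: "\<forall>i\<in>I. 1 \<le> i \<and> i + d + 1 \<le> n" using g by (simp add: good_def)
  have finI: "finite I"
  proof (rule finite_subset[of I "{1..n}"])
    show "I \<subseteq> {1..n}" using Iin by auto
  qed simp
  have wp: "\<And>i. i \<in> I \<Longrightarrow> 1 \<le> fst (w i) \<and> fst (w i) \<le> d + 1 \<and> snd (w i) \<noteq> 0 \<and> \<bar>snd (w i)\<bar> \<le> int d"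
    using PiE_W[OF w] by blast
  define J where "J = (\<lambda>i. i + fst (w i)) ` I"
  define V where "V = I \<union> J"
  have V: "V \<subseteq> {1..n}"
  proof
    fix y assume "y \<in> V"
    then show "y \<in> {1..n}" unfolding V_def J_def using Iin wp by fastforce
  qed
  have injJ: "inj_on (\<lambda>i. i + fst (w i)) I"
    by (rule inj_onI) (use good_sep[OF g] wp in blast)
  have cJ: "card J = m" using card_image[OF injJ] m by (simp add: J_def)
  have IJ: "I \<inter> J = {}" using good_notin[OF g] wp by (auto simp: J_def)
  have finJ: "finite J" using finI by (simp add: J_def)
  have cV: "card V = 2*m" using IJ finI finJ m cJ by (simp add: V_def card_Un_disjoint)
  define pre where "pre x = (THE i. i \<in> I \<and> x = i + fst (w i))" for x
  have pre: "pre (i + fst (w i)) = i" if i: "i \<in> I" for i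
    unfolding pre_def
  proof (rule the_equality)
    show "i \<in> I \<and> i + fst (w i) = i + fst (w i)" using i by simp
    fix x assume x: "x \<in> I \<and> i + fst (w i) = x + fst (w x)"
    show "x = i" using good_sep[OF g, of x i "fst (w x)" "fst (w i)"] x i wp[of x] wp[of i] by simp
  qed
  define hh where "hh g x = (if x \<in> I then g x else nat (int (g (pre x)) + snd (w (pre x))))" for g :: "nat \<Rightarrow> nat" and x
  define G where "G = {g\<in>PiE I (\<lambda>_. {d+1..n-d}). \<not> coll I w g}"
  define A where "A = Aw n I w"
  define img where "img = (\<lambda>\<pi>. restrict \<pi> V) ` A"
  have cA: "card A = card img * fact (n - card V)"
    unfolding A_def img_def Aw_def
  proof (rule count_restrict[OF V])
    fix \<pi> \<pi>' assume agree: "\<forall>x\<in>V. \<pi> x = \<pi>' x" and P: "\<forall>i\<in>I. cst n \<pi> i (w i)"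
    show "\<forall>i\<in>I. cst n \<pi>' i (w i)"
    proof
      fix i assume i: "i \<in> I"
      have "i \<in> V" "i + fst (w i) \<in> V" using i by (auto simp: V_def J_def)
      then show "cst n \<pi>' i (w i)" using P i agree by (auto simp: cst_def)
    qed
  qed
  have "card G \<le> card img"
  proof (rule card_inj_on_le[where f="\<lambda>g. restrict (hh g) V"])
    show "finite img" unfolding img_def A_def Aw_def by (rule finite_imageI, rule finite_perms)
    show "inj_on (\<lambda>g. restrict (hh g) V) G"
    proof (rule inj_onI)
      fix g g' assume gG: "g \<in> G" and gG': "g' \<in> G" and eq: "restrict (hh g) V = restrict (hh g') V"
      have "\<forall>i\<in>I. g i = g' i"
      proof
        fix i assume i: "i \<in> I"
        have "restrict (hh g) V i = restrict (hh g') V i" using eq by simp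
        then show "g i = g' i" using i by (simp add: V_def hh_def)
      qed
      then show "g = g'" using gG gG' by (auto simp: G_def intro: PiE_ext)
    qed
    show "(\<lambda>g. restrict (hh g) V) ` G \<subseteq> img"
    proof
      fix y assume "y \<in> (\<lambda>g. restrict (hh g) V) ` G"
      then obtain gg where gg: "gg \<in> G" "y = restrict (hh gg) V" by blast
      have gS: "\<forall>i\<in>I. d + 1 \<le> gg i \<and> gg i \<le> n - d" using gg(1) by (auto simp: G_def PiE_def Pi_def)
      have nc: "\<not> coll I w gg" using gg(1) by (simp add: G_def)
      have hv: "hh gg i = gg i" if "i \<in> I" for i using that by (simp add: hh_def)
      have vj: "int (hh gg (i + fst (w i))) = int (gg i) + snd (w i) \<and> 1 \<le> int (gg i) + snd (w i)
                \<and> int (gg i) + snd (w i) \<le> int n" if i: "i \<in> I" for i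
      proof -
        have ni: "i + fst (w i) \<notin> I" using good_notin[OF g i] wp[OF i] by simp
        have b1: "d + 1 \<le> gg i" "gg i \<le> n - d" using gS i by auto
        have b2: "\<bar>snd (w i)\<bar> \<le> int d" using wp[OF i] by simp
        have b3: "1 \<le> int (gg i) + snd (w i)" "int (gg i) + snd (w i) \<le> int n" using b1 b2 by linarith+
        have "hh gg (i + fst (w i)) = nat (int (gg i) + snd (w i))" using ni pre[OF i] by (simp add: hh_def)
        then show ?thesis using b3 by simp
      qed
      have injh: "inj_on (hh gg) V"
      proof (rule inj_onI)
        fix x y assume x: "x \<in> V" and y: "y \<in> V" and e: "hh gg x = hh gg y"
        have NC: "\<And>i i'. i \<in> I \<Longrightarrow> i' \<in> I \<Longrightarrow> i \<noteq> i' \<Longrightarrow>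
            int (gg i) \<noteq> int (gg i') \<and> int (gg i) \<noteq> int (gg i') + snd (w i') \<and>
            int (gg i) \<noteq> int (gg i') + (snd (w i') - snd (w i))"
          using nc unfolding coll_def by auto
        show "x = y"
        proof (cases "x \<in> I")
          case xI: True
          show ?thesis
          proof (cases "y \<in> I")
            case True
            then have "int (gg x) = int (gg y)" using e xI hv by simp
            then show ?thesis using NC[OF xI True] by blast
          next
            case False
            then obtain i' where i': "i' \<in> I" "y = i' + fst (w i')" using y by (auto simp: V_def J_def)
            have "int (gg x) = int (gg i') + snd (w i')" using e xI hv vj[OF i'(1)] i'(2) by simp
            then show ?thesis using NC[OF xI i'(1)] wp[OF i'(1)] by (cases "x = i'") auto
          qed
        next
          case xJ: False
          then obtain i where i: "i \<in> I" "x = i + fst (w i)" using x by (auto simp: V_def J_def)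
          show ?thesis
          proof (cases "y \<in> I")
            case True
            have "int (gg y) = int (gg i) + snd (w i)" using e True hv vj[OF i(1)] i(2) by simp
            then show ?thesis using NC[OF True i(1)] wp[OF i(1)] xJ i by (cases "y = i") auto
          next
            case False
            then obtain i' where i': "i' \<in> I" "y = i' + fst (w i')" using y by (auto simp: V_def J_def)
            have "int (gg i) + snd (w i) = int (gg i') + snd (w i')" using e vj[OF i(1)] vj[OF i'(1)] i(2) i'(2)
              by (metis (no_types, lifting))
            then show ?thesis using NC[OF i(1) i'(1)] i i' by (cases "i = i'") auto
          qed
        qed
      qed
      have himg: "hh gg ` V \<subseteq> {1..n}"
      proof
        fix z assume "z \<in> hh gg ` V"
        then obtain x where x: "x \<in> V" "z = hh gg x" by blast
        show "z \<in> {1..n}"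
        proof (cases "x \<in> I")
          case True
          then show ?thesis using x gS hv[OF True] by auto
        next
          case False
          then obtain i where i: "i \<in> I" "x = i + fst (w i)" using x by (auto simp: V_def J_def)
          then show ?thesis using vj[OF i(1)] x(2) by auto
        qed
      qed
      obtain p0 where p0: "p0 permutes {1..n}" "\<forall>x\<in>V. p0 x = hh gg x"
        using perm_extend[OF V injh himg] by blast
      have "p0 \<in> A"
      proof -
        have "cst n p0 i (w i)" if i: "i \<in> I" for i
        proof -
          have "i \<in> V" "i + fst (w i) \<in> V" using i by (auto simp: V_def J_def)
          then have "p0 i = gg i" "int (p0 (i + fst (w i))) = int (gg i) + snd (w i)"
            using p0(2) hv[OF i] vj[OF i] by auto
          moreover have "i + fst (w i) \<le> n" using Iin wp[OF i] i by fastforce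
          ultimately show ?thesis by (simp add: cst_def)
        qed
        then show ?thesis using p0(1) by (simp add: A_def Aw_def)
      qed
      moreover have "restrict p0 V = y" using p0(2) gg(2) by (auto simp: restrict_def fun_eq_iff)
      ultimately show "y \<in> img" unfolding img_def by blast
    qed
  qed
  then have "real (card G) * fact (n - 2*m) \<le> real (card img) * fact (n - 2*m)"
    by (simp add: mult_right_mono)
  also have "\<dots> = real (card A)" using cA cV by simp
  finally show ?thesis by (simp add: G_def A_def)
qed

lemma lower_good:
  fixes n :: nat
  assumes g: "good n d I" and m: "card I = m" and mn: "2*m+1 \<le> n"
  shows "real (card {\<pi>. \<pi> permutes {1..n} \<and> (\<forall>i\<in>I. Xev n d \<pi> i)})
     \<ge> real (d*d+d)^m * (real (n-2*d)^m - 3 * real m^2 * real (n-2*d)^(m-1)) * fact (n-2*m)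
       - real m * real (d*d+d)^m * real (d*d+d) * (real n^m * fact (n - (2*m+1)))"
proof -
  have Iin: "\<forall>i\<in>I. 1 \<le> i \<and> i + d + 1 \<le> n" using g by (simp add: good_def)
  have finI: "finite I"
  proof (rule finite_subset[of I "{1..n}"])
    show "I \<subseteq> {1..n}" using Iin by auto
  qed simp
  define LB where "LB = real (n-2*d)^m - 3 * real m^2 * real (n-2*d)^(m-1)"
  define Lam where "Lam = d*d+d"
  have cS: "card {d+1..n-d} = n - 2*d" by simp
  have cPi: "card (PiE I (\<lambda>_. W d)) = Lam^m" using finI m by (simp add: card_PiE card_W Lam_def)
  have s1: "(\<Sum>w\<in>PiE I (\<lambda>_. W d). real (card (Aw n I w))) \<ge> real Lam^m * LB * fact (n-2*m)"
  proof -
    have "(\<Sum>w\<in>PiE I (\<lambda>_. W d). LB * fact (n-2*m)) \<le> (\<Sum>w\<in>PiE I (\<lambda>_. W d). real (card (Aw n I w)))"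
    proof (rule sum_mono)
      fix w assume w: "w \<in> PiE I (\<lambda>_. W d)"
      have "LB \<le> real (card {g\<in>PiE I (\<lambda>_. {d+1..n-d}). \<not> coll I w g})"
        using card_G[OF finI m, of "{d+1..n-d}" w] cS by (simp add: LB_def)
      then have "LB * fact (n-2*m) \<le> real (card {g\<in>PiE I (\<lambda>_. {d+1..n-d}). \<not> coll I w g}) * fact (n-2*m)"
        by (rule mult_right_mono) simp
      also have "\<dots> \<le> real (card (Aw n I w))" by (rule C2[OF g m w])
      finally show "LB * fact (n-2*m) \<le> real (card (Aw n I w))" .
    qed
    moreover have "(\<Sum>w\<in>PiE I (\<lambda>_. W d). LB * fact (n-2*m)) = real Lam^m * LB * fact (n-2*m)"
      using cPi by simp
    ultimately show ?thesis by linarith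
  qed
  have s2: "(\<Sum>k\<in>I. \<Sum>w\<in>PiE I (\<lambda>_. W d). \<Sum>u\<in>W d - {w k}. real (card (Aw2 n I w k u)))
      \<le> real m * real Lam^m * real Lam * (real n^m * fact (n - (2*m+1)))"
  proof -
    have "(\<Sum>k\<in>I. \<Sum>w\<in>PiE I (\<lambda>_. W d). \<Sum>u\<in>W d - {w k}. real (card (Aw2 n I w k u)))
      \<le> (\<Sum>k\<in>I. \<Sum>w\<in>PiE I (\<lambda>_. W d). real Lam * (real n^m * fact (n - (2*m+1))))"
    proof (rule sum_mono, rule sum_mono)
      fix k w assume k: "k \<in> I" and w: "w \<in> PiE I (\<lambda>_. W d)"
      have "(\<Sum>u\<in>W d - {w k}. real (card (Aw2 n I w k u))) \<le> (\<Sum>u\<in>W d - {w k}. real n^m * fact (n - (2*m+1)))"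
      proof (rule sum_mono)
        fix u assume u: "u \<in> W d - {w k}"
        have "card (Aw2 n I w k u) \<le> n^m * fact (n - (2*m+1))" by (rule C3[OF g m w k u mn])
        then have "real (card (Aw2 n I w k u)) \<le> real (n^m * fact (n - (2*m+1)))"
          by (simp only: of_nat_le_iff)
        then show "real (card (Aw2 n I w k u)) \<le> real n^m * fact (n - (2*m+1))" by simp
      qed
      also have "\<dots> = real (card (W d - {w k})) * (real n^m * fact (n - (2*m+1)))" by simp
      also have "\<dots> \<le> real Lam * (real n^m * fact (n - (2*m+1)))"
      proof (rule mult_right_mono)
        have "card (W d - {w k}) \<le> card (W d)" by (rule card_mono[OF finite_W]) auto
        then have "card (W d - {w k}) \<le> Lam" by (simp add: card_W Lam_def)
        then show "real (card (W d - {w k})) \<le> real Lam" by (simp only: of_nat_le_iff)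
      qed simp
      finally show "(\<Sum>u\<in>W d - {w k}. real (card (Aw2 n I w k u))) \<le> real Lam * (real n^m * fact (n - (2*m+1)))" .
    qed
    also have "\<dots> = real m * real Lam^m * real Lam * (real n^m * fact (n - (2*m+1)))"
      using cPi m by simp
    finally show ?thesis .
  qed
  have "real (card {\<pi>. \<pi> permutes {1..n} \<and> (\<forall>i\<in>I. Xev n d \<pi> i)})
     \<ge> (\<Sum>w\<in>PiE I (\<lambda>_. W d). real (card (Aw n I w)))
       - (\<Sum>k\<in>I. \<Sum>w\<in>PiE I (\<lambda>_. W d). \<Sum>u\<in>W d - {w k}. real (card (Aw2 n I w k u)))"
    by (rule lower_I[OF finI])
  then show ?thesis using s1 s2 unfolding LB_def Lam_def by linarith
qed

lemma fact_prod_real: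
  fixes n :: nat
  assumes "v \<le> n"
  shows "(fact n :: real) = fact (n - v) * (\<Prod>k<v. real n - real k)"
  using assms
proof (induction v)
  case 0 then show ?case by simp
next
  case (Suc v)
  obtain j where j: "n - v = Suc j" "n - Suc v = j" using Suc.prems by (metis Suc_diff_Suc Suc_le_eq diff_Suc_1)
  have "(fact (n - v) :: real) = fact (n - Suc v) * (real n - real v)"
    unfolding j using j Suc.prems by (simp add: of_nat_diff[symmetric])
  then show ?case using Suc by (simp add: mult.assoc)
qed

lemma prod_upper:
  fixes n :: nat
  assumes "v \<le> n"
  shows "(\<Prod>k<v. real n - real k) \<le> real n ^ v"
proof -
  have "(\<Prod>k<v. real n - real k) \<le> (\<Prod>k<v. real n)"
    by (rule prod_mono) (use assms in auto)
  then show ?thesis by simp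
qed

lemma prod_lower:
  fixes n :: nat
  assumes "v \<le> n" "n > 0"
  shows "(\<Prod>k<v. real n - real k) \<ge> real n ^ v * (1 - real v ^ 2 / (2 * real n))"
  using assms(1)
proof (induction v)
  case 0 then show ?case by simp
next
  case (Suc v)
  have n0: "real n > 0" using assms by simp
  have IH: "(\<Prod>k<v. real n - real k) \<ge> real n ^ v * (1 - real v ^ 2 / (2 * real n))" using Suc by simp
  have nv: "real n - real v \<ge> 0" using Suc.prems by simp
  have "real n ^ Suc v * (1 - real (Suc v) ^ 2 / (2 * real n))
      \<le> real n ^ v * (1 - real v ^ 2 / (2 * real n)) * (real n - real v)"
  proof -
    have e: "real n ^ v * (1 - real v ^ 2 / (2 * real n)) * (real n - real v)
        = real n ^ Suc v * ((1 - real v ^ 2 / (2 * real n)) * (1 - real v / real n))"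
      using n0 by (simp add: field_simps)
    have "(1 - real (Suc v) ^ 2 / (2 * real n)) \<le> (1 - real v ^ 2 / (2 * real n)) * (1 - real v / real n)"
    proof -
      have "(1 - real v ^ 2 / (2 * real n)) * (1 - real v / real n)
          = 1 - real v ^ 2 / (2 * real n) - real v / real n + (real v ^ 2 / (2 * real n)) * (real v / real n)"
      proof -
        have h: "\<And>a b::real. (1 - a) * (1 - b) = 1 - a - b + a * b" by algebra
        show ?thesis by (rule h)
      qed
      moreover have "(real v ^ 2 / (2 * real n)) * (real v / real n) \<ge> 0" using n0 by simp
      moreover have "real (Suc v) ^ 2 / (2 * real n) \<ge> real v ^ 2 / (2 * real n) + real v / real n"
        using n0 by (simp add: field_simps power2_eq_square)
      ultimately show ?thesis by linarith
    qed
    then have "real n ^ Suc v * (1 - real (Suc v) ^ 2 / (2 * real n))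
        \<le> real n ^ Suc v * ((1 - real v ^ 2 / (2 * real n)) * (1 - real v / real n))"
      by (rule mult_left_mono) simp
    then show ?thesis by (simp only: e)
  qed
  also have "\<dots> \<le> (\<Prod>k<v. real n - real k) * (real n - real v)"
    by (rule mult_right_mono[OF IH nv])
  also have "\<dots> = (\<Prod>k<Suc v. real n - real k)" by simp
  finally show ?case .
qed

lemma fact_ratio_upper:
  fixes n :: nat
  assumes "v \<le> n" "n > 0" "real v ^ 2 \<le> real n"
  shows "real n ^ v * fact (n - v) \<le> fact n * (1 + 2 * real v ^ 2 / real n)"
proof -
  define x where "x = real v ^ 2 / (2 * real n)"
  have x: "0 \<le> x" "x \<le> 1/2" using assms by (auto simp: x_def field_simps)
  have P: "(\<Prod>k<v. real n - real k) \<ge> real n ^ v * (1 - x)" using prod_lower[OF assms(1,2)] by (simp add: x_def)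
  have f: "(fact n :: real) = fact (n - v) * (\<Prod>k<v. real n - real k)" by (rule fact_prod_real[OF assms(1)])
  have "real n ^ v * fact (n - v) * (1 - x) \<le> fact n"
    using f P by (simp add: mult_left_mono mult.commute mult.left_commute)
  moreover have "1 \<le> (1 - x) * (1 + 4 * x)"
  proof -
    have "x * (3 - 4 * x) \<ge> 0" using x by (intro mult_nonneg_nonneg) auto
    moreover have "(1 - x) * (1 + 4 * x) = 1 + x * (3 - 4 * x)" by algebra
    ultimately show ?thesis by linarith
  qed
  ultimately have "real n ^ v * fact (n - v) * 1 \<le> fact n * (1 + 4 * x)"
  proof -
    assume a: "real n ^ v * fact (n - v) * (1 - x) \<le> fact n" and b: "1 \<le> (1 - x) * (1 + 4 * x)"
    have pos: "real n ^ v * fact (n - v) \<ge> 0" by simp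
    have "real n ^ v * fact (n - v) * 1 \<le> real n ^ v * fact (n - v) * ((1 - x) * (1 + 4 * x))"
      by (rule mult_left_mono[OF b pos])
    also have "\<dots> = (real n ^ v * fact (n - v) * (1 - x)) * (1 + 4 * x)" by (simp add: mult.assoc)
    also have "\<dots> \<le> fact n * (1 + 4 * x)" by (rule mult_right_mono[OF a]) (use x in simp)
    finally show ?thesis .
  qed
  then show ?thesis by (simp add: x_def)
qed

lemma fact_ratio_lower:
  fixes n :: nat
  assumes "v \<le> n"
  shows "(fact n :: real) \<le> real n ^ v * fact (n - v)"
proof -
  have "(fact n :: real) = fact (n - v) * (\<Prod>k<v. real n - real k)" by (rule fact_prod_real[OF assms])
  also have "\<dots> \<le> fact (n - v) * real n ^ v" by (rule mult_left_mono[OF prod_upper[OF assms]]) simp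
  finally show ?thesis by (simp add: mult.commute)
qed

lemma binom_real_le: "real (a choose k) \<le> real a ^ k / fact k"
proof -
  have "(a choose k) * fact k \<le> a ^ k" by (rule binomial_fact_pow)
  then have "real ((a choose k) * fact k) \<le> real (a ^ k)" by (simp only: of_nat_le_iff)
  then have "real (a choose k) * fact k \<le> real a ^ k" by simp
  then show ?thesis by (simp add: field_simps)
qed

lemma binom_ge:
  fixes n m :: nat
  assumes "1 \<le> m" "m + 1 \<le> n" "real (m+1) ^ 2 \<le> real n"
  shows "real ((n - 1) choose m) \<ge> real n ^ m / fact m * (1 - 2 * real m ^ 2 / real n)"
proof -
  have n0: "n > 0" using assms by simp
  have b: "real ((n - 1) choose m) = fact (n - 1) / (fact m * fact (n - 1 - m))"
    by (rule binomial_fact) (use assms in simp)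
  have fn: "(fact n :: real) = real n * fact (n - 1)" using n0 by (metis fact_Suc Suc_diff_1 of_nat_fact of_nat_mult)
  have e1: "n - 1 - m = n - (m + 1)" by simp
  have P: "(\<Prod>k<m+1. real n - real k) \<ge> real n ^ (m+1) * (1 - real (m+1) ^ 2 / (2 * real n))"
    by (rule prod_lower) (use assms n0 in auto)
  have f: "(fact n :: real) = fact (n - (m+1)) * (\<Prod>k<m+1. real n - real k)" by (rule fact_prod_real) (use assms in simp)
  have q: "real (m+1) ^ 2 / (2 * real n) \<le> 2 * real m ^ 2 / real n"
  proof -
    have m1: "1 \<le> real m" using assms(1) by simp
    have mm: "real m * 1 \<le> real m * real m" by (rule mult_left_mono) (use m1 in auto)
    have "real (m+1) ^ 2 = real m * real m + 2 * real m + 1" by (simp add: power2_eq_square algebra_simps)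
    moreover have "4 * real m ^ 2 = 4 * (real m * real m)" by (simp add: power2_eq_square)
    ultimately have "real (m+1) ^ 2 \<le> 4 * real m ^ 2" using mm m1 by linarith
    then show ?thesis using n0 by (simp add: field_simps)
  qed
  have "real n * real ((n - 1) choose m) = fact n / (fact m * fact (n - (m+1)))"
    using b fn e1 by simp
  also have "\<dots> = (\<Prod>k<m+1. real n - real k) / fact m" using f by simp
  also have "\<dots> \<ge> real n ^ (m+1) * (1 - 2 * real m ^ 2 / real n) / fact m"
  proof (rule divide_right_mono)
    have "real n ^ (m+1) * (1 - 2 * real m ^ 2 / real n) \<le> real n ^ (m+1) * (1 - real (m+1) ^ 2 / (2 * real n))"
      by (rule mult_left_mono) (use q in auto)
    then show "real n ^ (m+1) * (1 - 2 * real m ^ 2 / real n) \<le> (\<Prod>k<m+1. real n - real k)" using P by linarith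
  qed simp
  finally have fin: "real n ^ (m+1) * (1 - 2 * real m ^ 2 / real n) / fact m \<le> real n * real ((n - 1) choose m)" .
  have h: "\<And>a b c f::real. a * b * c / f = a * (b / f * c)" by (simp add: field_simps)
  have "real n ^ (m+1) * (1 - 2 * real m ^ 2 / real n) / fact m = real n * (real n ^ m / fact m * (1 - 2 * real m ^ 2 / real n))"
    using h[of "real n" "real n ^ m"] by simp
  then have "real n * (real n ^ m / fact m * (1 - 2 * real m ^ 2 / real n)) \<le> real n * real ((n - 1) choose m)"
    using fin by simp
  then show ?thesis using n0 by (simp only: mult_le_cancel_left_pos of_nat_0_less_iff)
qed

lemma finite_subsets_of: "finite A \<Longrightarrow> finite {J. J \<subseteq> A \<and> P J}"
  by (rule finite_subset[of _ "Pow A"]) auto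

lemma card_contain1:
  fixes n m x :: nat
  assumes "1 \<le> m"
  shows "card {I. I \<subseteq> {1..<n} \<and> card I = m \<and> x \<in> I} \<le> (n - 2) choose (m - 1)"
proof (cases "x \<in> {1..<n}")
  case False
  then have e: "{I. I \<subseteq> {1..<n} \<and> card I = m \<and> x \<in> I} = {}" by auto
  show ?thesis unfolding e by simp
next
  case True
  have "card {I. I \<subseteq> {1..<n} \<and> card I = m \<and> x \<in> I} \<le> card {J. J \<subseteq> {1..<n} - {x} \<and> card J = m - 1}"
  proof (rule card_inj_on_le[where f="\<lambda>I. I - {x}"])
    show "inj_on (\<lambda>I. I - {x}) {I. I \<subseteq> {1..<n} \<and> card I = m \<and> x \<in> I}"
      by (rule inj_onI) (metis (no_types, lifting) insert_Diff mem_Collect_eq)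
    show "(\<lambda>I. I - {x}) ` {I. I \<subseteq> {1..<n} \<and> card I = m \<and> x \<in> I} \<subseteq> {J. J \<subseteq> {1..<n} - {x} \<and> card J = m - 1}"
    proof
      fix J assume "J \<in> (\<lambda>I. I - {x}) ` {I. I \<subseteq> {1..<n} \<and> card I = m \<and> x \<in> I}"
      then obtain I where I: "I \<subseteq> {1..<n}" "card I = m" "x \<in> I" "J = I - {x}" by blast
      have "finite I" using I(1) finite_subset by blast
      then show "J \<in> {J. J \<subseteq> {1..<n} - {x} \<and> card J = m - 1}" using I by auto
    qed
    show "finite {J. J \<subseteq> {1..<n} - {x} \<and> card J = m - 1}" by (rule finite_subsets_of) simp
  qed
  also have "\<dots> = card ({1..<n} - {x}) choose (m - 1)" by (rule n_subsets) simp
  also have "card ({1..<n} - {x}) = n - 2" using True by simp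
  finally show ?thesis .
qed

lemma card_contain2:
  fixes n m x y :: nat
  assumes xy: "x \<noteq> y"
  shows "card {I. I \<subseteq> {1..<n} \<and> card I = m \<and> x \<in> I \<and> y \<in> I} \<le> (if 2 \<le> m then (n - 3) choose (m - 2) else 0)"
proof (cases "x \<in> {1..<n} \<and> y \<in> {1..<n} \<and> 2 \<le> m")
  case False
  have e: "{I. I \<subseteq> {1..<n} \<and> card I = m \<and> x \<in> I \<and> y \<in> I} = {}"
  proof (rule ccontr)
    assume "{I. I \<subseteq> {1..<n} \<and> card I = m \<and> x \<in> I \<and> y \<in> I} \<noteq> {}"
    then obtain I where I: "I \<subseteq> {1..<n}" "card I = m" "x \<in> I" "y \<in> I" by blast
    have fI: "finite I" using I(1) finite_subset by blast
    have "card {x, y} \<le> card I" by (rule card_mono[OF fI]) (use I in auto)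
    then have "2 \<le> m" using xy I(2) by simp
    then show False using False I by auto
  qed
  show ?thesis unfolding e by simp
next
  case True
  have "card {I. I \<subseteq> {1..<n} \<and> card I = m \<and> x \<in> I \<and> y \<in> I} \<le> card {J. J \<subseteq> {1..<n} - {x, y} \<and> card J = m - 2}"
  proof (rule card_inj_on_le[where f="\<lambda>I. I - {x, y}"])
    show "inj_on (\<lambda>I. I - {x, y}) {I. I \<subseteq> {1..<n} \<and> card I = m \<and> x \<in> I \<and> y \<in> I}"
    proof (rule inj_onI)
      fix I I' assume "I \<in> {I. I \<subseteq> {1..<n} \<and> card I = m \<and> x \<in> I \<and> y \<in> I}"
        "I' \<in> {I. I \<subseteq> {1..<n} \<and> card I = m \<and> x \<in> I \<and> y \<in> I}" "I - {x, y} = I' - {x, y}"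
      then show "I = I'" by blast
    qed
    show "(\<lambda>I. I - {x, y}) ` {I. I \<subseteq> {1..<n} \<and> card I = m \<and> x \<in> I \<and> y \<in> I} \<subseteq> {J. J \<subseteq> {1..<n} - {x, y} \<and> card J = m - 2}"
    proof
      fix J assume "J \<in> (\<lambda>I. I - {x, y}) ` {I. I \<subseteq> {1..<n} \<and> card I = m \<and> x \<in> I \<and> y \<in> I}"
      then obtain I where I: "I \<subseteq> {1..<n}" "card I = m" "x \<in> I" "y \<in> I" "J = I - {x, y}" by blast
      have "finite I" using I(1) finite_subset by blast
      then have "card (I - {x, y}) = m - 2" using I xy by (simp add: card_Diff_subset)
      then show "J \<in> {J. J \<subseteq> {1..<n} - {x, y} \<and> card J = m - 2}" using I by auto
    qed
    show "finite {J. J \<subseteq> {1..<n} - {x, y} \<and> card J = m - 2}" by (rule finite_subsets_of) simp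
  qed
  also have "\<dots> = card ({1..<n} - {x, y}) choose (m - 2)" by (rule n_subsets) simp
  also have "card ({1..<n} - {x, y}) = n - 3" using True xy by (simp add: card_Diff_subset)
  finally show ?thesis using True by simp
qed

lemma B1_real:
  fixes n m :: nat
  assumes "1 \<le> m" "1 \<le> n"
  shows "real ((n - 2) choose (m - 1)) \<le> real n ^ m / fact m * (real m / real n)"
proof -
  obtain k where k: "m = Suc k" using assms by (cases m) auto
  have "real ((n - 2) choose k) \<le> real (n - 2) ^ k / fact k" by (rule binom_real_le)
  also have "\<dots> \<le> real n ^ k / fact k" by (rule divide_right_mono, rule power_mono) auto
  also have "\<dots> = real n ^ Suc k / fact (Suc k) * (real (Suc k) / real n)"
  proof -
    have N: "real n \<noteq> 0" using assms by simp
    have F: "(fact k :: real) \<noteq> 0" by simp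
    have K: "real (Suc k) \<noteq> 0" by simp
    have g: "\<And>N P K F::real. N \<noteq> 0 \<Longrightarrow> K \<noteq> 0 \<Longrightarrow> F \<noteq> 0 \<Longrightarrow> P / F = (N*P)/(K*F)*(K/N)"
      by (simp add: field_simps)
    have "real n ^ k / fact k = (real n * real n ^ k) / (real (Suc k) * fact k) * (real (Suc k) / real n)"
      by (rule g[OF N K F])
    then show ?thesis by (simp only: fact_Suc power_Suc of_nat_mult)
  qed
  finally show ?thesis using k by simp
qed

lemma B2_real:
  fixes n m :: nat
  assumes "1 \<le> n"
  shows "real (if 2 \<le> m then (n - 3) choose (m - 2) else 0) \<le> real n ^ m / fact m * (real m ^ 2 / real n ^ 2)"
proof (cases "2 \<le> m")
  case False then show ?thesis by simp
next
  case True
  obtain k where k: "m = Suc (Suc k)" using True by (metis add_2_eq_Suc le_Suc_ex)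
  have "real ((n - 3) choose k) \<le> real (n - 3) ^ k / fact k" by (rule binom_real_le)
  also have "\<dots> \<le> real n ^ k / fact k" by (rule divide_right_mono, rule power_mono) auto
  also have "\<dots> \<le> real n ^ k / fact k * ((real k + 2) / (real k + 1))"
  proof -
    have "1 \<le> (real k + 2) / (real k + 1)" by simp
    then have "real n ^ k / fact k * 1 \<le> real n ^ k / fact k * ((real k + 2) / (real k + 1))"
      by (rule mult_left_mono) simp
    then show ?thesis by simp
  qed
  also have "\<dots> = real n ^ Suc (Suc k) / fact (Suc (Suc k)) * (real (Suc (Suc k)) ^ 2 / real n ^ 2)"
  proof -
    have N: "real n \<noteq> 0" using assms by simp
    have F: "(fact k :: real) \<noteq> 0" by simp
    have A: "real k + 2 \<noteq> 0" by simp
    have B: "real k + 1 \<noteq> 0" by simp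
    have g: "\<And>N P A B F::real. N \<noteq> 0 \<Longrightarrow> A \<noteq> 0 \<Longrightarrow> B \<noteq> 0 \<Longrightarrow> F \<noteq> 0 \<Longrightarrow>
        P / F * (A / B) = (N*(N*P))/(A*(B*F)) * ((A*A)/(N*N))"
      by (simp add: field_simps)
    have "real n ^ k / fact k * ((real k + 2) / (real k + 1))
        = (real n * (real n * real n ^ k)) / ((real k + 2) * ((real k + 1) * fact k)) * (((real k + 2) * (real k + 2)) / (real n * real n))"
      by (rule g[OF N A B F])
    moreover have "real (Suc (Suc k)) = real k + 2" "real (Suc k) = real k + 1" by simp_all
    ultimately show ?thesis by (simp only: fact_Suc power_Suc power2_eq_square)
  qed
  finally show ?thesis using k True by simp
qed

lemma card_bad:
  fixes n m d :: nat
  assumes m1: "1 \<le> m" and n1: "1 \<le> n"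
  shows "real (card {I. I \<subseteq> {1..<n} \<and> card I = m \<and> \<not> good n d I})
    \<le> real n ^ m / fact m * ((real d * real m + real (d+1) * real m ^ 2) / real n)"
proof -
  define S1 where "S1 x = {I. I \<subseteq> {1..<n} \<and> card I = m \<and> x \<in> I}" for x
  define S2 where "S2 p = {I. I \<subseteq> {1..<n} \<and> card I = m \<and> fst p \<in> I \<and> snd p \<in> I}" for p :: "nat \<times> nat"
  define P where "P = Sigma {1..<n} (\<lambda>x. {x+1..x+d+1})"
  define c1 where "c1 = (n - 2) choose (m - 1)"
  define c2 where "c2 = (if 2 \<le> m then (n - 3) choose (m - 2) else 0)"
  have finP: "finite P" by (simp add: P_def)
  have sub: "{I. I \<subseteq> {1..<n} \<and> card I = m \<and> \<not> good n d I} \<subseteq> (\<Union>x\<in>{n-d..<n}. S1 x) \<union> (\<Union>p\<in>P. S2 p)"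
  proof
    fix I assume I: "I \<in> {I. I \<subseteq> {1..<n} \<and> card I = m \<and> \<not> good n d I}"
    then have Is: "I \<subseteq> {1..<n}" "card I = m" "\<not> good n d I" by auto
    show "I \<in> (\<Union>x\<in>{n-d..<n}. S1 x) \<union> (\<Union>p\<in>P. S2 p)"
    proof (cases "\<forall>i\<in>I. 1 \<le> i \<and> i + d + 1 \<le> n")
      case False
      then obtain i where i: "i \<in> I" "\<not> (1 \<le> i \<and> i + d + 1 \<le> n)" by blast
      have "i \<in> {n-d..<n}" using i Is(1) by auto
      moreover have "I \<in> S1 i" using i Is by (simp add: S1_def)
      ultimately show ?thesis by blast
    next
      case True
      then obtain i i' where ii: "i \<in> I" "i' \<in> I" "i < i'" "\<not> i + d + 1 < i'" using Is(3) by (auto simp: good_def)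
      have "(i, i') \<in> P" using ii Is(1) by (auto simp: P_def)
      moreover have "I \<in> S2 (i, i')" using ii Is by (simp add: S2_def)
      ultimately show ?thesis by blast
    qed
  qed
  have fin1: "finite (S1 x)" for x unfolding S1_def by (rule finite_subsets_of) simp
  have fin2: "finite (S2 p)" for p unfolding S2_def by (rule finite_subsets_of) simp
  have a1: "card {I. I \<subseteq> {1..<n} \<and> card I = m \<and> \<not> good n d I} \<le> card ((\<Union>x\<in>{n-d..<n}. S1 x) \<union> (\<Union>p\<in>P. S2 p))"
    by (rule card_mono[OF _ sub]) (use fin1 fin2 finP in auto)
  have a2: "card ((\<Union>x\<in>{n-d..<n}. S1 x) \<union> (\<Union>p\<in>P. S2 p)) \<le> card (\<Union>x\<in>{n-d..<n}. S1 x) + card (\<Union>p\<in>P. S2 p)"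
    by (rule card_Un_le)
  have a3: "card (\<Union>x\<in>{n-d..<n}. S1 x) \<le> (\<Sum>x\<in>{n-d..<n}. card (S1 x))" by (rule card_UN_le) simp
  have a4: "(\<Sum>x\<in>{n-d..<n}. card (S1 x)) \<le> (\<Sum>x\<in>{n-d..<n}. c1)"
    by (rule sum_mono) (unfold S1_def c1_def, rule card_contain1[OF m1])
  have a5: "card (\<Union>p\<in>P. S2 p) \<le> (\<Sum>p\<in>P. card (S2 p))" by (rule card_UN_le[OF finP])
  have a6: "(\<Sum>p\<in>P. card (S2 p)) \<le> (\<Sum>p\<in>P. c2)"
  proof (rule sum_mono)
    fix p assume "p \<in> P"
    then have "fst p \<noteq> snd p" by (auto simp: P_def)
    then show "card (S2 p) \<le> c2" unfolding S2_def c2_def by (rule card_contain2)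
  qed
  have a7: "(\<Sum>x\<in>{n-d..<n}. c1) = card {n-d..<n} * c1" "(\<Sum>p\<in>P. c2) = card P * c2" by simp_all
  have cb: "card {I. I \<subseteq> {1..<n} \<and> card I = m \<and> \<not> good n d I} \<le> card {n-d..<n} * c1 + card P * c2"
    using a1 a2 a3 a4 a5 a6 a7 by linarith
  have cP: "card P = (n - 1) * (d + 1)"
    unfolding P_def by (subst card_SigmaI) auto
  have cT: "card {n-d..<n} \<le> d" by simp
  define Q where "Q = real n ^ m / fact m"
  have Q0: "Q \<ge> 0" by (simp add: Q_def)
  have n0: "real n > 0" using n1 by simp
  have r1: "real c1 \<le> Q * (real m / real n)" unfolding c1_def Q_def by (rule B1_real[OF m1 n1])
  have r2: "real c2 \<le> Q * (real m ^ 2 / real n ^ 2)" unfolding c2_def Q_def by (rule B2_real[OF n1])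
  have "real (card {I. I \<subseteq> {1..<n} \<and> card I = m \<and> \<not> good n d I}) \<le> real (card {n-d..<n}) * real c1 + real (card P) * real c2"
  proof -
    have "real (card {I. I \<subseteq> {1..<n} \<and> card I = m \<and> \<not> good n d I}) \<le> real (card {n-d..<n} * c1 + card P * c2)"
      using cb by (simp only: of_nat_le_iff)
    then show ?thesis by simp
  qed
  also have "\<dots> \<le> real d * (Q * (real m / real n)) + (real (n - 1) * real (d + 1)) * (Q * (real m ^ 2 / real n ^ 2))"
  proof (rule add_mono)
    show "real (card {n-d..<n}) * real c1 \<le> real d * (Q * (real m / real n))"
      by (rule mult_mono) (use cT r1 in auto)
    show "real (card P) * real c2 \<le> (real (n - 1) * real (d + 1)) * (Q * (real m ^ 2 / real n ^ 2))"
    proof -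
      have "real (card P) = real (n - 1) * real (d + 1)" by (simp only: cP of_nat_mult)
      moreover have "real (n - 1) * real (d + 1) \<ge> 0" by simp
      ultimately show ?thesis using r2 by (metis mult_left_mono)
    qed
  qed
  also have "\<dots> \<le> real d * (Q * (real m / real n)) + real n * real (d + 1) * (Q * (real m ^ 2 / real n ^ 2))"
    by (rule add_left_mono, rule mult_right_mono, rule mult_right_mono) (use Q0 in auto)
  also have "\<dots> = Q * ((real d * real m + real (d+1) * real m ^ 2) / real n)"
    using n0 by (simp add: field_simps power2_eq_square)
  finally show ?thesis by (simp add: Q_def)
qed

lemma card_Sets: "card {I. I \<subseteq> {1..<n} \<and> card I = m} = (n - 1) choose m"
  using n_subsets[of "{1..<n}" m] by simp

lemma finite_Sets: "finite {I. I \<subseteq> {1..<(n::nat)} \<and> card I = m}"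
  by (rule finite_subsets_of) simp

lemma EXI_nonneg: "EXI n d I \<ge> 0" by (simp add: EXI_def)

lemma upper_total:
  fixes n d m :: nat
  assumes m1: "1 \<le> m" and n1: "1 \<le> n" and mn: "4 * real m ^ 2 \<le> real n"
  shows "Ssum n d m \<le> real (d*d+d) ^ m / fact m * (1 + 8 * real m ^ 2 / real n)"
proof -
  define L where "L = real (d*d+d)"
  define u where "u = L ^ m * (1 + 8 * real m ^ 2 / real n) / real n ^ m"
  have n0: "real n > 0" using n1 by simp
  have m2n: "2 * m \<le> n"
  proof -
    have "real m \<le> real m ^ 2" using m1 by (simp add: power2_eq_square)
    then have "2 * real m \<le> real n" using mn by linarith
    then show ?thesis by linarith
  qed
  have fr: "real n ^ (2*m) * fact (n - 2*m) \<le> fact n * (1 + 2 * real (2*m) ^ 2 / real n)"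
  proof (rule fact_ratio_upper[OF m2n])
    show "n > 0" using n1 by simp
    show "real (2*m) ^ 2 \<le> real n" using mn by (simp add: power2_eq_square)
  qed
  have fr2: "real n ^ m * fact (n - 2*m) \<le> fact n * (1 + 8 * real m ^ 2 / real n) / real n ^ m"
  proof -
    have eq1: "real n ^ (2*m) = real n ^ m * real n ^ m" by (simp add: mult_2 power_add)
    have eq2: "2 * real (2*m) ^ 2 = 8 * real m ^ 2" by (simp add: power2_eq_square)
    have "real n ^ m * fact (n - 2*m) * real n ^ m \<le> fact n * (1 + 8 * real m ^ 2 / real n)"
      using fr unfolding eq1 eq2[symmetric] by (simp only: mult_ac)
    moreover have "real n ^ m > 0" using n0 by simp
    ultimately show ?thesis by (simp only: pos_le_divide_eq)
  qed
  have each: "EXI n d I \<le> u" if I: "I \<in> {I. I \<subseteq> {1..<n} \<and> card I = m}" for I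
  proof -
    have "card {\<pi>. \<pi> permutes {1..n} \<and> (\<forall>i\<in>I. Xev n d \<pi> i)} \<le> (d*d+d)^m * (n^m * fact (n - 2*m))"
      by (rule upper_I2[OF _ _ m2n]) (use I in auto)
    then have "real (card {\<pi>. \<pi> permutes {1..n} \<and> (\<forall>i\<in>I. Xev n d \<pi> i)}) \<le> real ((d*d+d)^m * (n^m * fact (n - 2*m)))"
      by (simp only: of_nat_le_iff)
    also have "\<dots> = L ^ m * (real n ^ m * fact (n - 2*m))" by (simp add: L_def)
    also have "\<dots> \<le> L ^ m * (fact n * (1 + 8 * real m ^ 2 / real n) / real n ^ m)"
      by (rule mult_left_mono[OF fr2]) (simp add: L_def)
    finally have "real (card {\<pi>. \<pi> permutes {1..n} \<and> (\<forall>i\<in>I. Xev n d \<pi> i)}) / fact n \<le> u"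
      by (simp add: u_def field_simps)
    then show ?thesis by (simp add: EXI_def)
  qed
  have "Ssum n d m \<le> (\<Sum>I\<in>{I. I \<subseteq> {1..<n} \<and> card I = m}. u)"
    unfolding Ssum_def by (rule sum_mono[OF each])
  also have "\<dots> = real ((n - 1) choose m) * u" by (simp only: sum_constant card_Sets)
  also have "\<dots> \<le> real n ^ m / fact m * u"
  proof (rule mult_right_mono)
    have "real ((n - 1) choose m) \<le> real (n - 1) ^ m / fact m" by (rule binom_real_le)
    also have "\<dots> \<le> real n ^ m / fact m" by (rule divide_right_mono, rule power_mono) auto
    finally show "real ((n - 1) choose m) \<le> real n ^ m / fact m" .
    show "0 \<le> u" by (simp add: u_def L_def)
  qed
  also have "\<dots> = L ^ m / fact m * (1 + 8 * real m ^ 2 / real n)"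
    using n0 by (simp add: u_def field_simps)
  finally show ?thesis by (simp add: L_def)
qed

lemma small:
  fixes d m :: nat
  assumes d1: "1 \<le> d" and m1: "1 \<le> m"
  defines "E \<equiv> real d ^ 2 * real m ^ 2"
  shows "real d * real m \<le> E" "real m ^ 2 \<le> E" "real d * real m ^ 2 \<le> E" "real m * real d ^ 2 \<le> E"
    "real m \<le> E" "real d \<le> E"
proof -
  have D: "1 \<le> real d" using d1 by simp
  have M: "1 \<le> real m" using m1 by simp
  have D2: "real d \<le> real d ^ 2" using D by (simp add: power2_eq_square)
  have M2: "real m \<le> real m ^ 2" using M by (simp add: power2_eq_square)
  have D21: "1 \<le> real d ^ 2" using D D2 by linarith
  have M21: "1 \<le> real m ^ 2" using M M2 by linarith
  show "real d * real m \<le> E" unfolding E_def by (rule mult_mono[OF D2 M2]) (use D in auto)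
  show "real m ^ 2 \<le> E" unfolding E_def using mult_right_mono[OF D21, of "real m ^ 2"] by simp
  show "real d * real m ^ 2 \<le> E" unfolding E_def by (rule mult_right_mono[OF D2]) simp
  show "real m * real d ^ 2 \<le> E" unfolding E_def using mult_right_mono[OF M2, of "real d ^ 2"] by (simp add: mult.commute)
  show "real m \<le> E" unfolding E_def using mult_mono[OF D21 M2] M by simp
  show "real d \<le> E" unfolding E_def using mult_mono[OF D2 M21] D by simp
qed

lemma lower_goodI:
  fixes n d m :: nat
  assumes d1: "1 \<le> d" and m1: "1 \<le> m" and n1: "1 \<le> n"
    and ep: "real d ^ 2 * real m ^ 2 \<le> real n / 100"
    and g: "good n d I" and cI: "card I = m"
  shows "EXI n d I \<ge> (real (d*d+d) / real n) ^ m * (1 - 9 * (real d ^ 2 * real m ^ 2 / real n))"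
proof -
  define E where "E = real d ^ 2 * real m ^ 2"
  define eps where "eps = E / real n"
  define L where "L = real (d*d+d)"
  define nr where "nr = real n"
  define F where "F = (fact n :: real)"
  define P where "P = (L / nr) ^ m"
  have n0: "nr > 0" using n1 by (simp add: nr_def)
  note sm = small[OF d1 m1, folded E_def]
  have En: "E \<le> nr / 100" using ep by (simp add: E_def nr_def)
  have eps_def': "E = eps * nr" using n0 by (simp add: eps_def nr_def)
  have eps0: "0 \<le> eps" using n0 by (simp add: eps_def E_def nr_def)
  have eps1: "eps \<le> 1/100" using En n0 by (simp add: eps_def nr_def field_simps)
  have F0: "F > 0" by (simp add: F_def)
  have L0: "L \<ge> 0" by (simp add: L_def)
  have P0: "P \<ge> 0" using L0 n0 by (simp add: P_def)
  have mn: "2*m+1 \<le> n"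
  proof -
    have "3 * real m \<le> nr" using sm(5) En by linarith
    then have "3 * m \<le> n" by (simp add: nr_def)
    then show ?thesis using m1 by linarith
  qed
  have dn: "2*d \<le> n"
  proof -
    have "2 * real d \<le> nr" using sm(6) En by linarith
    then show ?thesis by (simp add: nr_def)
  qed
  have LB: "real (card {\<pi>. \<pi> permutes {1..n} \<and> (\<forall>i\<in>I. Xev n d \<pi> i)})
     \<ge> real (d*d+d)^m * (real (n-2*d)^m - 3 * real m^2 * real (n-2*d)^(m-1)) * fact (n-2*m)
       - real m * real (d*d+d)^m * real (d*d+d) * (real n^m * fact (n - (2*m+1)))"
    by (rule lower_good[OF g cI mn])
  define s where "s = real (n - 2*d)"
  have s_eq: "s = nr - 2 * real d" using dn by (simp add: s_def nr_def of_nat_diff)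
  have s0: "0 \<le> s" by (simp add: s_def)
  have snr: "s \<le> nr" using s_eq by simp
  have A: "s ^ m \<ge> nr ^ m * (1 - 2 * real d * real m / nr)"
  proof -
    define x where "x = - (2 * real d / nr)"
    have x1: "-1 \<le> x" using dn n0 by (simp add: x_def nr_def field_simps)
    have "1 + real m * x \<le> (1 + x) ^ m" by (rule Bernoulli_inequality[OF x1])
    moreover have "s = nr * (1 + x)"
    proof -
      have "nr * (1 + x) = nr - 2 * real d" using n0 unfolding x_def by (simp add: field_simps)
      then show ?thesis using s_eq by simp
    qed
    ultimately have "nr ^ m * (1 + real m * x) \<le> s ^ m" using n0 by (simp add: power_mult_distrib)
    moreover have "1 + real m * x = 1 - 2 * real d * real m / nr" by (simp add: x_def field_simps)
    ultimately show ?thesis by simp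
  qed
  have B: "3 * real m ^ 2 * s ^ (m - 1) \<le> nr ^ m * (3 * real m ^ 2 / nr)"
  proof -
    have "s ^ (m - 1) \<le> nr ^ (m - 1)" by (rule power_mono[OF snr s0])
    then have "3 * real m ^ 2 * s ^ (m - 1) \<le> 3 * real m ^ 2 * nr ^ (m - 1)" by (rule mult_left_mono) simp
    also have "nr ^ m = nr * nr ^ (m - 1)" using m1 by (metis power_eq_if not_one_le_zero)
    then have "3 * real m ^ 2 * nr ^ (m - 1) = nr ^ m * (3 * real m ^ 2 / nr)" using n0 by (simp add: field_simps)
    finally show ?thesis .
  qed
  define beta where "beta = 1 - 5 * eps"
  have beta0: "beta \<ge> 0" using eps1 by (simp add: beta_def)
  have br: "s ^ m - 3 * real m ^ 2 * s ^ (m - 1) \<ge> nr ^ m * beta"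
  proof -
    have "2 * real d * real m / nr + 3 * real m ^ 2 / nr \<le> 5 * eps"
    proof -
      have "2 * real d * real m + 3 * real m ^ 2 \<le> 5 * E" using sm(1) sm(2) by linarith
      then have "(2 * real d * real m + 3 * real m ^ 2) / nr \<le> 5 * E / nr" by (rule divide_right_mono) (use n0 in simp)
      then show ?thesis by (simp add: eps_def add_divide_distrib nr_def)
    qed
    then have "1 - 5 * eps \<le> 1 - 2 * real d * real m / nr - 3 * real m ^ 2 / nr" by linarith
    then have "nr ^ m * (1 - 5 * eps) \<le> nr ^ m * (1 - 2 * real d * real m / nr - 3 * real m ^ 2 / nr)"
      by (rule mult_left_mono) (use n0 in simp)
    also have "\<dots> = nr ^ m * (1 - 2 * real d * real m / nr) - nr ^ m * (3 * real m ^ 2 / nr)"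
      by (simp only: right_diff_distrib)
    finally have "nr ^ m * (1 - 2 * real d * real m / nr) - nr ^ m * (3 * real m ^ 2 / nr) \<ge> nr ^ m * beta"
      by (simp add: beta_def)
    then show ?thesis using A B by linarith
  qed
  have C: "fact (n - 2*m) \<ge> F / nr ^ (2*m)"
  proof -
    have "F \<le> nr ^ (2*m) * fact (n - 2*m)" unfolding F_def nr_def by (rule fact_ratio_lower) (use mn in simp)
    then show ?thesis using n0 by (simp add: field_simps)
  qed
  have T1: "L ^ m * (s ^ m - 3 * real m ^ 2 * s ^ (m - 1)) * fact (n - 2*m) \<ge> F * P * beta"
  proof -
    have "L ^ m * (nr ^ m * beta) * (F / nr ^ (2*m)) \<le> L ^ m * (s ^ m - 3 * real m ^ 2 * s ^ (m - 1)) * fact (n - 2*m)"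
    proof (rule mult_mono[OF mult_left_mono[OF br] C])
      have "0 \<le> nr ^ m * beta" using beta0 n0 by simp
      then have "0 \<le> s ^ m - 3 * real m ^ 2 * s ^ (m - 1)" using br by linarith
      then show "0 \<le> L ^ m * (s ^ m - 3 * real m ^ 2 * s ^ (m - 1))" using L0 by simp
    qed (use L0 F0 n0 in auto)
    moreover have "L ^ m * (nr ^ m * beta) * (F / nr ^ (2*m)) = F * P * beta"
    proof -
      have e2: "nr ^ (2*m) = nr ^ m * nr ^ m" by (simp add: mult_2 power_add)
      have "nr ^ m > 0" using n0 by simp
      then show ?thesis unfolding e2 by (simp add: P_def power_divide field_simps)
    qed
    ultimately show ?thesis by simp
  qed
  have D: "nr ^ m * fact (n - (2*m+1)) \<le> 2 * F / nr ^ (m+1)"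
  proof -
    have sq: "real (2*m+1) ^ 2 \<le> nr / 10"
    proof -
      have "real (2*m+1) \<le> 3 * real m" using m1 by simp
      then have "real (2*m+1) ^ 2 \<le> (3 * real m) ^ 2" by (rule power_mono) simp
      also have "\<dots> = 9 * real m ^ 2" by (simp add: power2_eq_square)
      finally show ?thesis using sm(2) En n0 by linarith
    qed
    have "real n ^ (2*m+1) * fact (n - (2*m+1)) \<le> fact n * (1 + 2 * real (2*m+1) ^ 2 / real n)"
      by (rule fact_ratio_upper[OF mn]) (use n1 sq n0 in \<open>auto simp: nr_def\<close>)
    also have "\<dots> \<le> fact n * 2"
    proof (rule mult_left_mono)
      have "2 * real (2*m+1) ^ 2 / real n \<le> 1" using sq n0 by (simp add: nr_def field_simps)
      then show "1 + 2 * real (2*m+1) ^ 2 / real n \<le> 2" by simp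
    qed simp
    finally have f3: "real n ^ (2*m+1) * fact (n - (2*m+1)) \<le> fact n * 2" .
    have ee: "2*m+1 = (m+1) + m" by simp
    have e3: "real n ^ (2*m+1) = nr ^ (m+1) * nr ^ m" unfolding ee nr_def by (rule power_add)
    have "nr ^ (m+1) * (nr ^ m * fact (n - (2*m+1))) \<le> 2 * F"
      using f3 unfolding e3 F_def by (simp only: mult_ac)
    then show ?thesis using n0 by (simp add: field_simps)
  qed
  have T2: "real m * L ^ m * L * (nr ^ m * fact (n - (2*m+1))) \<le> F * P * (4 * eps)"
  proof -
    have "real m * L ^ m * L * (nr ^ m * fact (n - (2*m+1))) \<le> real m * L ^ m * L * (2 * F / nr ^ (m+1))"
      by (rule mult_left_mono[OF D]) (use L0 in simp)
    also have "\<dots> = F * P * (2 * real m * L / nr)"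
      using n0 by (simp add: P_def power_divide field_simps)
    also have "\<dots> \<le> F * P * (4 * eps)"
    proof (rule mult_left_mono)
      have "L \<le> 2 * real d ^ 2" using d1 by (simp add: L_def power2_eq_square)
      then have "2 * real m * L \<le> 2 * real m * (2 * real d ^ 2)" by (rule mult_left_mono) simp
      also have "\<dots> \<le> 4 * E" using sm(4) by simp
      finally have "2 * real m * L / nr \<le> 4 * E / nr" by (rule divide_right_mono) (use n0 in simp)
      then show "2 * real m * L / nr \<le> 4 * eps" by (simp add: eps_def nr_def)
    qed (use F0 P0 in simp)
    finally show ?thesis .
  qed
  have "real (card {\<pi>. \<pi> permutes {1..n} \<and> (\<forall>i\<in>I. Xev n d \<pi> i)}) \<ge> F * P * beta - F * P * (4 * eps)"
    using LB T1 T2 by (simp add: L_def s_def nr_def)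
  also have "F * P * beta - F * P * (4 * eps) = F * (P * (1 - 9 * eps))" by (simp add: beta_def algebra_simps)
  finally have "F * (P * (1 - 9 * eps)) \<le> real (card {\<pi>. \<pi> permutes {1..n} \<and> (\<forall>i\<in>I. Xev n d \<pi> i)})" .
  then have "P * (1 - 9 * eps) \<le> real (card {\<pi>. \<pi> permutes {1..n} \<and> (\<forall>i\<in>I. Xev n d \<pi> i)}) / F"
    using F0 by (simp add: field_simps)
  then show ?thesis by (simp add: EXI_def F_def P_def L_def nr_def eps_def E_def)
qed

lemma lower_total:
  fixes n d m :: nat
  assumes d1: "1 \<le> d" and m1: "1 \<le> m" and n1: "1 \<le> n"
    and ep: "real d ^ 2 * real m ^ 2 \<le> real n / 100"
  shows "Ssum n d m \<ge> real (d*d+d) ^ m / fact m * (1 - 14 * (real d ^ 2 * real m ^ 2 / real n))"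
proof -
  define E where "E = real d ^ 2 * real m ^ 2"
  define eps where "eps = E / real n"
  define L where "L = real (d*d+d)"
  define nr where "nr = real n"
  define P where "P = (L / nr) ^ m"
  define Q where "Q = nr ^ m / fact m"
  define Sets where "Sets = {I. I \<subseteq> {1..<n} \<and> card I = m}"
  define Good where "Good = {I\<in>Sets. good n d I}"
  define Bad where "Bad = {I. I \<subseteq> {1..<n} \<and> card I = m \<and> \<not> good n d I}"
  have n0: "nr > 0" using n1 by (simp add: nr_def)
  note sm = small[OF d1 m1, folded E_def]
  have En: "E \<le> nr / 100" using ep by (simp add: E_def nr_def)
  have eps0: "0 \<le> eps" using n0 by (simp add: eps_def E_def nr_def)
  have eps1: "eps \<le> 1/100" using En n0 by (simp add: eps_def nr_def field_simps)
  have P0: "P \<ge> 0" using n0 by (simp add: P_def L_def)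
  have Q0: "Q \<ge> 0" using n0 by (simp add: Q_def)
  have ell0: "P * (1 - 9 * eps) \<ge> 0" using P0 eps1 by simp
  have finS: "finite Sets" unfolding Sets_def by (rule finite_Sets)
  have each: "EXI n d I \<ge> P * (1 - 9 * eps)" if "I \<in> Good" for I
    using lower_goodI[OF d1 m1 n1 ep, of I] that
    by (simp add: Good_def Sets_def P_def L_def nr_def eps_def E_def)
  have s1: "Ssum n d m \<ge> (\<Sum>I\<in>Good. EXI n d I)"
    unfolding Ssum_def Sets_def[symmetric]
    by (rule sum_mono2[OF finS]) (auto simp: Good_def EXI_nonneg)
  have s2: "(\<Sum>I\<in>Good. EXI n d I) \<ge> real (card Good) * (P * (1 - 9 * eps))"
  proof -
    have "(\<Sum>I\<in>Good. P * (1 - 9 * eps)) \<le> (\<Sum>I\<in>Good. EXI n d I)" by (rule sum_mono[OF each])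
    then show ?thesis by simp
  qed
  have cS: "card Sets = card Good + card Bad"
  proof -
    have "Sets = Good \<union> Bad" "Good \<inter> Bad = {}" by (auto simp: Sets_def Good_def Bad_def)
    moreover have "finite Good" "finite Bad" using finS by (auto simp: Sets_def Good_def Bad_def intro: finite_subset)
    ultimately show ?thesis by (simp add: card_Un_disjoint)
  qed
  have cSets: "real (card Sets) \<ge> Q * (1 - 2 * real m ^ 2 / nr)"
  proof -
    have "real (m+1) ^ 2 \<le> 4 * real m ^ 2"
    proof -
      have M: "1 \<le> real m" using m1 by simp
      have "real m * 1 \<le> real m * real m" by (rule mult_left_mono) (use M in auto)
      moreover have "real (m+1) ^ 2 = real m * real m + 2 * real m + 1" by (simp add: power2_eq_square algebra_simps)
      moreover have "4 * real m ^ 2 = 4 * (real m * real m)" by (simp add: power2_eq_square)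
      ultimately show ?thesis using M by linarith
    qed
    then have sq: "real (m+1) ^ 2 \<le> real n" using sm(2) En n0 by (simp add: nr_def)
    have mn: "m + 1 \<le> n"
    proof -
      have "real (m+1) \<le> real (m+1) ^ 2" by (simp add: power2_eq_square)
      then show ?thesis using sq by linarith
    qed
    have "real ((n - 1) choose m) \<ge> real n ^ m / fact m * (1 - 2 * real m ^ 2 / real n)"
      by (rule binom_ge[OF m1 mn sq])
    moreover have "card Sets = (n - 1) choose m" unfolding Sets_def by (rule card_Sets)
    ultimately show ?thesis by (simp add: Q_def nr_def)
  qed
  have cBad: "real (card Bad) \<le> Q * ((real d * real m + real (d+1) * real m ^ 2) / nr)"
    unfolding Bad_def Q_def nr_def by (rule card_bad[OF m1 n1])
  have cGood: "real (card Good) \<ge> Q * (1 - 5 * eps)"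
  proof -
    have "2 * real m ^ 2 + (real d * real m + real (d+1) * real m ^ 2) \<le> 5 * E"
    proof -
      have "real (d+1) * real m ^ 2 = real d * real m ^ 2 + real m ^ 2" by (simp add: algebra_simps)
      then show ?thesis using sm(1,2,3) by linarith
    qed
    then have "(2 * real m ^ 2 + (real d * real m + real (d+1) * real m ^ 2)) / nr \<le> 5 * E / nr"
      by (rule divide_right_mono) (use n0 in simp)
    then have le: "2 * real m ^ 2 / nr + (real d * real m + real (d+1) * real m ^ 2) / nr \<le> 5 * eps"
      by (simp add: eps_def nr_def add_divide_distrib)
    have "Q * (1 - 5 * eps) \<le> Q * (1 - 2 * real m ^ 2 / nr - (real d * real m + real (d+1) * real m ^ 2) / nr)"
      by (rule mult_left_mono) (use le Q0 in auto)
    also have "\<dots> = Q * (1 - 2 * real m ^ 2 / nr) - Q * ((real d * real m + real (d+1) * real m ^ 2) / nr)"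
      by (simp only: right_diff_distrib)
    also have "\<dots> \<le> real (card Sets) - real (card Bad)" by (rule diff_mono[OF cSets cBad])
    also have "\<dots> = real (card Good)" using cS by simp
    finally show ?thesis .
  qed
  have "Q * (1 - 5 * eps) * (P * (1 - 9 * eps)) \<le> real (card Good) * (P * (1 - 9 * eps))"
    by (rule mult_right_mono[OF cGood ell0])
  moreover have "Q * P = L ^ m / fact m" using n0 by (simp add: Q_def P_def power_divide field_simps)
  moreover have "(1 - 5 * eps) * (1 - 9 * eps) \<ge> 1 - 14 * eps"
  proof -
    have "(1 - 5 * eps) * (1 - 9 * eps) = 1 - 14 * eps + 45 * (eps * eps)" by algebra
    moreover have "eps * eps \<ge> 0" by simp
    ultimately show ?thesis by linarith
  qed
  ultimately have "L ^ m / fact m * (1 - 14 * eps) \<le> real (card Good) * (P * (1 - 9 * eps))"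
  proof -
    assume a: "Q * (1 - 5 * eps) * (P * (1 - 9 * eps)) \<le> real (card Good) * (P * (1 - 9 * eps))"
      and b: "Q * P = L ^ m / fact m" and c: "(1 - 5 * eps) * (1 - 9 * eps) \<ge> 1 - 14 * eps"
    have QP0: "Q * P \<ge> 0" using Q0 P0 by simp
    have "L ^ m / fact m * (1 - 14 * eps) = (Q * P) * (1 - 14 * eps)" using b by simp
    also have "\<dots> \<le> (Q * P) * ((1 - 5 * eps) * (1 - 9 * eps))" by (rule mult_left_mono[OF c QP0])
    also have "\<dots> = Q * (1 - 5 * eps) * (P * (1 - 9 * eps))" by (simp add: mult_ac)
    finally show ?thesis using a by linarith
  qed
  then show ?thesis using s1 s2 by (simp add: L_def eps_def E_def)
qed

lemma Ssum_0: "Ssum n d 0 = 1"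
proof -
  have e: "{I. I \<subseteq> {1..<n} \<and> card I = 0} = {{}}"
  proof (intro set_eqI iffI)
    fix I assume "I \<in> {I. I \<subseteq> {1..<n} \<and> card I = 0}"
    then have "I \<subseteq> {1..<n}" "card I = 0" by auto
    moreover then have "finite I" using finite_subset by blast
    ultimately show "I \<in> {{}}" by simp
  qed auto
  have "EXI n d {} = 1"
    unfolding EXI_def using card_permutations[of "{1..n}" n] by simp
  then show ?thesis unfolding Ssum_def e by simp
qed

lemma main_bound:
  fixes n d m :: nat
  assumes d1: "1 \<le> d" and n1: "1 \<le> n"
    and ep: "real d ^ 2 * real m ^ 2 \<le> real n / 100"
  shows "\<bar>Ssum n d m - (real d ^ 2 + real d) ^ m / fact m\<bar>
      \<le> 14 * \<bar>real d ^ 2 * real m ^ 2 / real n * ((real d ^ 2 + real d) ^ m / fact m)\<bar>"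
proof (cases "m = 0")
  case True then show ?thesis by (simp add: Ssum_0)
next
  case False
  then have m1: "1 \<le> m" by simp
  define T where "T = (real d ^ 2 + real d) ^ m / fact m"
  define eps where "eps = real d ^ 2 * real m ^ 2 / real n"
  have LT: "real (d*d+d) ^ m / fact m = T" by (simp add: T_def power2_eq_square)
  have T0: "T \<ge> 0" by (simp add: T_def)
  have eps0: "eps \<ge> 0" by (simp add: eps_def)
  have up: "Ssum n d m \<le> T * (1 + 8 * real m ^ 2 / real n)"
  proof -
    have "real m ^ 2 \<le> real d ^ 2 * real m ^ 2" using small(2)[OF d1 m1] by simp
    then have h4: "4 * real m ^ 2 \<le> real n" using ep by linarith
    have "Ssum n d m \<le> real (d*d+d) ^ m / fact m * (1 + 8 * real m ^ 2 / real n)"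
      by (rule upper_total[OF m1 n1 h4])
    then show ?thesis unfolding LT .
  qed
  have "8 * real m ^ 2 / real n \<le> 8 * eps"
  proof -
    have "real m ^ 2 \<le> real d ^ 2 * real m ^ 2" using small(2)[OF d1 m1] by simp
    then show ?thesis unfolding eps_def by (simp add: divide_right_mono)
  qed
  then have h8: "8 * real m ^ 2 / real n \<le> 8 * eps" .
  have up2: "Ssum n d m - T \<le> 14 * (eps * T)"
  proof -
    have "Ssum n d m - T \<le> T * (8 * real m ^ 2 / real n)" using up by (simp add: algebra_simps)
    also have "\<dots> \<le> T * (8 * eps)" by (rule mult_left_mono[OF h8 T0])
    also have "T * (8 * eps) = 8 * (eps * T)" by (simp add: mult_ac)
    also have "\<dots> \<le> 14 * (eps * T)" using mult_nonneg_nonneg[OF eps0 T0] by linarith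
    finally show ?thesis .
  qed
  have lo: "Ssum n d m \<ge> T * (1 - 14 * eps)"
  proof -
    have "Ssum n d m \<ge> real (d*d+d) ^ m / fact m * (1 - 14 * (real d ^ 2 * real m ^ 2 / real n))"
      by (rule lower_total[OF d1 m1 n1 ep])
    then show ?thesis unfolding LT eps_def .
  qed
  have lo2: "T - Ssum n d m \<le> 14 * (eps * T)" using lo by (simp add: algebra_simps)
  have "\<bar>Ssum n d m - T\<bar> \<le> 14 * (eps * T)" using up2 lo2 by linarith
  also have "\<dots> = 14 * \<bar>eps * T\<bar>" using T0 eps0 by simp
  finally show ?thesis by (simp add: T_def eps_def)
qed

theorem mainTheorem2:
  fixes d m :: "nat \<Rightarrow> nat"
  assumes dpos: "\<And>n. d n \<ge> 1"
    and dlog: "(\<lambda>n. real (d n)) \<in> O(\<lambda>n. ln (real n))"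
    and mlog: "(\<lambda>n. real (m n)) \<in> O(\<lambda>n. (ln (real n))^2)"
  shows "(\<lambda>n. Ssum n (d n) (m n) - (real (d n)^2 + real (d n)) ^ m n / fact (m n))
           \<in> O(\<lambda>n. real (d n)^2 * real (m n)^2 / real n
                    * ((real (d n)^2 + real (d n)) ^ m n / fact (m n)))"
proof -
  obtain c1 where c1: "c1 > 0" "eventually (\<lambda>n. norm (real (d n)) \<le> c1 * norm (ln (real n))) at_top"
    using landau_o.bigE[OF dlog] by blast
  obtain c2 where c2: "c2 > 0" "eventually (\<lambda>n. norm (real (m n)) \<le> c2 * norm ((ln (real n))^2)) at_top"
    using landau_o.bigE[OF mlog] by blast
  define K where "K = c1^2 * c2^2 + 1"
  have K0: "K > 0"
  proof -
    have "c1^2 * c2^2 \<ge> 0" by simp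
    then show ?thesis unfolding K_def by linarith
  qed
  have lim: "(\<lambda>n::nat. ln (real n)^6 / real n) \<longlonglongrightarrow> 0" by real_asymp
  have ev: "eventually (\<lambda>n. ln (real n)^6 / real n < 1/(100*K)) at_top"
    by (rule order_tendstoD(2)[OF lim]) (use K0 in simp)
  have ev1: "eventually (\<lambda>n::nat. n \<ge> 1) at_top" by (rule eventually_ge_at_top)
  have evE: "eventually (\<lambda>n. real (d n)^2 * real (m n)^2 \<le> real n / 100) at_top"
    using c1(2) c2(2) ev ev1
  proof eventually_elim
    case (elim n)
    have ln0: "ln (real n) \<ge> 0" using elim(4) by simp
    have n0: "real n > 0" using elim(4) by simp
    have hd: "real (d n) \<le> c1 * ln (real n)" using elim(1) ln0 by simp
    have hm: "real (m n) \<le> c2 * ln (real n)^2" using elim(2) ln0 by simp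
    have d2: "real (d n)^2 \<le> c1^2 * ln (real n)^2"
    proof -
      have "real (d n)^2 \<le> (c1 * ln (real n))^2" by (rule power_mono[OF hd]) simp
      then show ?thesis by (simp add: power_mult_distrib)
    qed
    have m2': "real (m n)^2 \<le> c2^2 * (ln (real n)^2)^2"
    proof -
      have "real (m n)^2 \<le> (c2 * ln (real n)^2)^2" by (rule power_mono[OF hm]) simp
      then show ?thesis by (simp add: power_mult_distrib)
    qed
    have "real (d n)^2 * real (m n)^2 \<le> (c1^2 * ln (real n)^2) * (c2^2 * (ln (real n)^2)^2)"
      by (rule mult_mono[OF d2 m2']) simp_all
    also have "\<dots> = c1^2 * c2^2 * ln (real n)^6" by (simp add: power_mult_distrib power_add[symmetric] power_mult[symmetric] mult_ac)
    also have "\<dots> \<le> K * ln (real n)^6" unfolding K_def by (rule mult_right_mono) (simp_all add: ln0)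
    also have "\<dots> \<le> real n / 100"
    proof -
      have "ln (real n)^6 < real n / (100 * K)" using elim(3) n0 K0 by (simp add: field_simps)
      then have "K * ln (real n)^6 \<le> K * (real n / (100 * K))"
        by (intro mult_left_mono) (use K0 in auto)
      also have "\<dots> = real n / 100" using K0 by simp
      finally show ?thesis .
    qed
    finally show ?case .
  qed
  have "eventually (\<lambda>n. norm (Ssum n (d n) (m n) - (real (d n)^2 + real (d n)) ^ m n / fact (m n))
      \<le> 14 * norm (real (d n)^2 * real (m n)^2 / real n * ((real (d n)^2 + real (d n)) ^ m n / fact (m n)))) at_top"
    using evE ev1
  proof eventually_elim
    case (elim n)
    show ?case using main_bound[OF dpos elim(2) elim(1)] by simp
  qed
  then show ?thesis by (rule bigoI)
qed

end
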